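(* Let $d\sigma^2$ be a Kossowski metric on a $2$-manifold $M^2$ and $p$ an $A_2$-point. For a strongly adapted coordinate system $(u,v)$ at $p$ with $d\sigma^2=E\,du^2+2F\,du\,dv+G\,dv^2$ and with $\lambda$ (satisfying $EG-F^2=\lambda^2$) chosen so that $\lambda_v>0$, define at singular points $(u,0)$ $$\kappa_s(u):=\frac{-F_vE_u+2EF_{uv}-EE_{vv}}{2E^{3/2}\lambda_v}.$$ Then the value of $\kappa_s$ does not depend on the choice of strongly adapted coordinate system satisfying $\lambda_v>0$. In particular, it does not depend on the orientation of the singular curve.
   Context: For a smooth positive semi-definite metric $d\sigma^2$ with $\langle\cdot,\cdot\rangle=d\sigma^2$: singular points are where it is not positive definite; $\mathcal{N}_p=\{v: d\sigma^2(v,w)=0\ \forall w\}$ is the null space; the Kossowski pseudo-connection is $\Gamma(X,Y,Z)=\tfrac12\bigl(X\langle Y,Z\rangle+Y\langle X,Z\rangle-Z\langle X,Y\rangle+\langle[X,Y],Z\rangle-\langle[X,Z],Y\rangle-\langle[Y,Z],X\rangle\bigr)$; the metric is admissible if at each singular point $p$, $\Gamma(V_1,V_2,V_3)(p)=0$ whenever $V_3(p)\in\mathcal{N}_p$. An admissible metric is frontal if in each local coordinate system there is a smooth $\lambda$ with $EG-F^2=\lambda^2$; a singular point is non-degenerate if $d\lambda\neq0$ there; a Kossowski metric is a frontal metric all of whose singular points are non-degenerate. Near a non-degenerate singular point $p$ the singular set is a regular curve $\gamma(t)$ with $\gamma(0)=p$, and there is a smooth nonvanishing vector field $\eta(t)\in\mathcal{N}_{\gamma(t)}$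 along it; $p$ is an $A_2$-point if $\eta(0)$ and $\dot\gamma(0)$ are linearly independent. A local coordinate system $(u,v)$ near an $A_2$-point is strongly adapted if the singular set in its domain is the $u$-axis and $\partial_v\in\mathcal{N}_{(u,0)}$ at every singular point $(u,0)$. *)

theory Defs
  imports "HOL-Analysis.Analysis"
begin

text \<open>Local model: the surface is an open set U of the plane (points of type real \<times> real),
  the metric is given by smooth coefficient functions E0, F0, G0 on U.\<close>

type_synonym pt = "real \<times> real"

definition Du :: "(pt \<Rightarrow> real) \<Rightarrow> pt \<Rightarrow> real" where
  "Du f x = deriv (\<lambda>t. f (t, snd x)) (fst x)"

definition Dv :: "(pt \<Rightarrow> real) \<Rightarrow> pt \<Rightarrow> real" where
  "Dv f x = deriv (\<lambda>t. f (fst x, t)) (snd x)"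

definition DuV :: "(pt \<Rightarrow> pt) \<Rightarrow> pt \<Rightarrow> pt" where
  "DuV phi x = (Du (\<lambda>y. fst (phi y)) x, Du (\<lambda>y. snd (phi y)) x)"

definition DvV :: "(pt \<Rightarrow> pt) \<Rightarrow> pt \<Rightarrow> pt" where
  "DvV phi x = (Dv (\<lambda>y. fst (phi y)) x, Dv (\<lambda>y. snd (phi y)) x)"

fun pderivs :: "bool list \<Rightarrow> (pt \<Rightarrow> real) \<Rightarrow> pt \<Rightarrow> real" where
  "pderivs [] f = f"
| "pderivs (b # bs) f = (if b then Du (pderivs bs f) else Dv (pderivs bs f))"

definition smooth2_on :: "pt set \<Rightarrow> (pt \<Rightarrow> real) \<Rightarrow> bool" where
  "smooth2_on S f \<longleftrightarrow> (\<forall>bs. \<forall>x\<in>S. pderivs bs f differentiable (at x))"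

definition smoothV_on :: "pt set \<Rightarrow> (pt \<Rightarrow> pt) \<Rightarrow> bool" where
  "smoothV_on S phi \<longleftrightarrow> smooth2_on S (\<lambda>y. fst (phi y)) \<and> smooth2_on S (\<lambda>y. snd (phi y))"

definition smooth1_on :: "real set \<Rightarrow> (real \<Rightarrow> real) \<Rightarrow> bool" where
  "smooth1_on I g \<longleftrightarrow> (\<forall>n. \<forall>t\<in>I. ((deriv ^^ n) g) field_differentiable (at t))"

definition smoothC_on :: "real set \<Rightarrow> (real \<Rightarrow> pt) \<Rightarrow> bool" where
  "smoothC_on I c \<longleftrightarrow> smooth1_on I (\<lambda>t. fst (c t)) \<and> smooth1_on I (\<lambda>t. snd (c t))"

definition dC :: "(real \<Rightarrow> pt) \<Rightarrow> real \<Rightarrow> pt" where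
  "dC c t = (deriv (\<lambda>s. fst (c s)) t, deriv (\<lambda>s. snd (c s)) t)"

definition ip :: "(pt \<Rightarrow> real) \<Rightarrow> (pt \<Rightarrow> real) \<Rightarrow> (pt \<Rightarrow> real) \<Rightarrow> pt \<Rightarrow> pt \<Rightarrow> pt \<Rightarrow> real" where
  "ip E0 F0 G0 x a b = E0 x * fst a * fst b + F0 x * (fst a * snd b + snd a * fst b) + G0 x * snd a * snd b"

definition psd_metric :: "pt set \<Rightarrow> (pt \<Rightarrow> real) \<Rightarrow> (pt \<Rightarrow> real) \<Rightarrow> (pt \<Rightarrow> real) \<Rightarrow> bool" where
  "psd_metric U E0 F0 G0 \<longleftrightarrow> open U \<and> smooth2_on U E0 \<and> smooth2_on U F0 \<and> smooth2_on U G0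
     \<and> (\<forall>x\<in>U. \<forall>a. ip E0 F0 G0 x a a \<ge> 0)"

definition singular_pt :: "pt set \<Rightarrow> (pt \<Rightarrow> real) \<Rightarrow> (pt \<Rightarrow> real) \<Rightarrow> (pt \<Rightarrow> real) \<Rightarrow> pt \<Rightarrow> bool" where
  "singular_pt U E0 F0 G0 x \<longleftrightarrow> x \<in> U \<and> \<not> (\<forall>a. a \<noteq> 0 \<longrightarrow> ip E0 F0 G0 x a a > 0)"

definition null_space :: "(pt \<Rightarrow> real) \<Rightarrow> (pt \<Rightarrow> real) \<Rightarrow> (pt \<Rightarrow> real) \<Rightarrow> pt \<Rightarrow> pt set" where
  "null_space E0 F0 G0 x = {a. \<forall>b. ip E0 F0 G0 x a b = 0}"

definition vf_app :: "(pt \<Rightarrow> pt) \<Rightarrow> (pt \<Rightarrow> real) \<Rightarrow> pt \<Rightarrow> real" where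
  "vf_app X f x = fst (X x) * Du f x + snd (X x) * Dv f x"

definition lie :: "(pt \<Rightarrow> pt) \<Rightarrow> (pt \<Rightarrow> pt) \<Rightarrow> pt \<Rightarrow> pt" where
  "lie X Y x = (vf_app X (\<lambda>y. fst (Y y)) x - vf_app Y (\<lambda>y. fst (X y)) x,
                vf_app X (\<lambda>y. snd (Y y)) x - vf_app Y (\<lambda>y. snd (X y)) x)"

definition ipf :: "(pt \<Rightarrow> real) \<Rightarrow> (pt \<Rightarrow> real) \<Rightarrow> (pt \<Rightarrow> real) \<Rightarrow> (pt \<Rightarrow> pt) \<Rightarrow> (pt \<Rightarrow> pt) \<Rightarrow> pt \<Rightarrow> real" where
  "ipf E0 F0 G0 X Y x = ip E0 F0 G0 x (X x) (Y x)"

definition kossowski_Gamma ::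
  "(pt \<Rightarrow> real) \<Rightarrow> (pt \<Rightarrow> real) \<Rightarrow> (pt \<Rightarrow> real) \<Rightarrow> (pt \<Rightarrow> pt) \<Rightarrow> (pt \<Rightarrow> pt) \<Rightarrow> (pt \<Rightarrow> pt) \<Rightarrow> pt \<Rightarrow> real" where
  "kossowski_Gamma E0 F0 G0 X Y Z x = (1/2) *
     ( vf_app X (ipf E0 F0 G0 Y Z) x + vf_app Y (ipf E0 F0 G0 X Z) x - vf_app Z (ipf E0 F0 G0 X Y) x
     + ip E0 F0 G0 x (lie X Y x) (Z x) - ip E0 F0 G0 x (lie X Z x) (Y x) - ip E0 F0 G0 x (lie Y Z x) (X x))"

definition admissible :: "pt set \<Rightarrow> (pt \<Rightarrow> real) \<Rightarrow> (pt \<Rightarrow> real) \<Rightarrow> (pt \<Rightarrow> real) \<Rightarrow> bool" where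
  "admissible U E0 F0 G0 \<longleftrightarrow> psd_metric U E0 F0 G0 \<and>
     (\<forall>p. singular_pt U E0 F0 G0 p \<longrightarrow>
        (\<forall>V1 V2 V3. smoothV_on U V1 \<and> smoothV_on U V2 \<and> smoothV_on U V3 \<and>
            V3 p \<in> null_space E0 F0 G0 p \<longrightarrow> kossowski_Gamma E0 F0 G0 V1 V2 V3 p = 0))"

text \<open>Frontal with all singular points non-degenerate (the whole of U is one chart).\<close>
definition kossowski_metric :: "pt set \<Rightarrow> (pt \<Rightarrow> real) \<Rightarrow> (pt \<Rightarrow> real) \<Rightarrow> (pt \<Rightarrow> real) \<Rightarrow> bool" where
  "kossowski_metric U E0 F0 G0 \<longleftrightarrow> admissible U E0 F0 G0 \<and>
     (\<exists>lam. smooth2_on U lam \<and> (\<forall>x\<in>U. E0 x * G0 x - (F0 x)\<^sup>2 = (lam x)\<^sup>2) \<and>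
        (\<forall>p. singular_pt U E0 F0 G0 p \<longrightarrow> (Du lam p, Dv lam p) \<noteq> (0, 0)))"

definition A2_point :: "pt set \<Rightarrow> (pt \<Rightarrow> real) \<Rightarrow> (pt \<Rightarrow> real) \<Rightarrow> (pt \<Rightarrow> real) \<Rightarrow> pt \<Rightarrow> bool" where
  "A2_point U E0 F0 G0 p \<longleftrightarrow> singular_pt U E0 F0 G0 p \<and>
     (\<exists>W eps gam eta. open W \<and> p \<in> W \<and> W \<subseteq> U \<and> eps > 0 \<and>
        smoothC_on {-eps<..<eps} gam \<and> gam 0 = p \<and>
        (\<forall>t\<in>{-eps<..<eps}. dC gam t \<noteq> 0) \<and>
        gam ` {-eps<..<eps} = {q\<in>W. singular_pt U E0 F0 G0 q} \<and>
        smoothC_on {-eps<..<eps} eta \<and>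
        (\<forall>t\<in>{-eps<..<eps}. eta t \<noteq> 0 \<and> eta t \<in> null_space E0 F0 G0 (gam t)) \<and>
        (\<forall>s t. s *\<^sub>R eta 0 + t *\<^sub>R dC gam 0 = 0 \<longrightarrow> s = 0 \<and> t = 0))"

definition coord_system :: "pt set \<Rightarrow> pt set \<Rightarrow> (pt \<Rightarrow> pt) \<Rightarrow> bool" where
  "coord_system U V phi \<longleftrightarrow> open V \<and> phi ` V \<subseteq> U \<and> open (phi ` V) \<and> inj_on phi V \<and>
     smoothV_on V phi \<and> (\<exists>psi. (\<forall>x\<in>V. psi (phi x) = x) \<and> smoothV_on (phi ` V) psi)"

definition cE :: "(pt \<Rightarrow> real) \<Rightarrow> (pt \<Rightarrow> real) \<Rightarrow> (pt \<Rightarrow> real) \<Rightarrow> (pt \<Rightarrow> pt) \<Rightarrow> pt \<Rightarrow> real" where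
  "cE E0 F0 G0 phi x = ip E0 F0 G0 (phi x) (DuV phi x) (DuV phi x)"
definition cF :: "(pt \<Rightarrow> real) \<Rightarrow> (pt \<Rightarrow> real) \<Rightarrow> (pt \<Rightarrow> real) \<Rightarrow> (pt \<Rightarrow> pt) \<Rightarrow> pt \<Rightarrow> real" where
  "cF E0 F0 G0 phi x = ip E0 F0 G0 (phi x) (DuV phi x) (DvV phi x)"
definition cG :: "(pt \<Rightarrow> real) \<Rightarrow> (pt \<Rightarrow> real) \<Rightarrow> (pt \<Rightarrow> real) \<Rightarrow> (pt \<Rightarrow> pt) \<Rightarrow> pt \<Rightarrow> real" where
  "cG E0 F0 G0 phi x = ip E0 F0 G0 (phi x) (DvV phi x) (DvV phi x)"

definition strongly_adapted :: "pt set \<Rightarrow> (pt \<Rightarrow> real) \<Rightarrow> (pt \<Rightarrow> real) \<Rightarrow> (pt \<Rightarrow> real) \<Rightarrow> pt \<Rightarrow> pt set \<Rightarrow> (pt \<Rightarrow> pt) \<Rightarrow> bool" where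
  "strongly_adapted U E0 F0 G0 p V phi \<longleftrightarrow> coord_system U V phi \<and> p \<in> phi ` V \<and>
     (\<forall>q\<in>V. singular_pt U E0 F0 G0 (phi q) \<longleftrightarrow> snd q = 0) \<and>
     (\<forall>q\<in>V. snd q = 0 \<longrightarrow> DvV phi q \<in> null_space E0 F0 G0 (phi q))"

definition good_lambda :: "(pt \<Rightarrow> real) \<Rightarrow> (pt \<Rightarrow> real) \<Rightarrow> (pt \<Rightarrow> real) \<Rightarrow> pt set \<Rightarrow> (pt \<Rightarrow> pt) \<Rightarrow> (pt \<Rightarrow> real) \<Rightarrow> bool" where
  "good_lambda E0 F0 G0 V phi lam \<longleftrightarrow> smooth2_on V lam \<and>
     (\<forall>q\<in>V. cE E0 F0 G0 phi q * cG E0 F0 G0 phi q - (cF E0 F0 G0 phi q)\<^sup>2 = (lam q)\<^sup>2) \<and>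
     (\<forall>q\<in>V. snd q = 0 \<longrightarrow> Dv lam q > 0)"

definition kappa_s :: "(pt \<Rightarrow> real) \<Rightarrow> (pt \<Rightarrow> real) \<Rightarrow> (pt \<Rightarrow> real) \<Rightarrow> (pt \<Rightarrow> pt) \<Rightarrow> (pt \<Rightarrow> real) \<Rightarrow> real \<Rightarrow> real" where
  "kappa_s E0 F0 G0 phi lam u =
     (let E = cE E0 F0 G0 phi; F = cF E0 F0 G0 phi; x = (u, 0) in
       (- Dv F x * Du E x + 2 * E x * Du (Dv F) x - E x * Dv (Dv E) x)
       / (2 * E x powr (3/2) * Dv lam x))"

end

theory Submission
  imports Defs
begin


lemma partial_has_derivative:
  assumes "f differentiable (at z)"
  shows "(f has_derivative (\<lambda>h. Du f z * fst h + Dv f z * snd h)) (at z)"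
proof -
  obtain D where D: "(f has_derivative D) (at z)" using assms unfolding differentiable_def by blast
  have lin: "linear D" using D has_derivative_linear by blast
  have c1: "((\<lambda>t. (t, snd z)) has_derivative (\<lambda>h. (h, 0))) (at (fst z))"
    by (intro has_derivative_Pair has_derivative_ident has_derivative_const)
  have c2: "((\<lambda>t. (fst z, t)) has_derivative (\<lambda>h. (0, h))) (at (snd z))"
    by (intro has_derivative_Pair has_derivative_ident has_derivative_const)
  have "((\<lambda>t. f (t, snd z)) has_derivative (\<lambda>h. D (h, 0))) (at (fst z))"
    using has_derivative_compose[OF c1, of f D] D by simp
  moreover have "(\<lambda>h. D (h, 0)) = (*) (D (1,0))"
  proof
    fix h :: real
    have "D (h, 0) = D (h *\<^sub>R (1,0))" by simp
    also have "\<dots> = h *\<^sub>R D (1,0)" by (rule linear_scale[OF lin])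
    finally show "D (h, 0) = D (1,0) * h" by simp
  qed
  ultimately have d1: "((\<lambda>t. f (t, snd z)) has_real_derivative D (1,0)) (at (fst z))"
    unfolding has_field_derivative_def by simp
  have "((\<lambda>t. f (fst z, t)) has_derivative (\<lambda>h. D (0, h))) (at (snd z))"
    using has_derivative_compose[OF c2, of f D] D by simp
  moreover have "(\<lambda>h. D (0, h)) = (*) (D (0,1))"
  proof
    fix h :: real
    have "D (0, h) = D (h *\<^sub>R (0,1))" by simp
    also have "\<dots> = h *\<^sub>R D (0,1)" by (rule linear_scale[OF lin])
    finally show "D (0, h) = D (0,1) * h" by simp
  qed
  ultimately have d2: "((\<lambda>t. f (fst z, t)) has_real_derivative D (0,1)) (at (snd z))"
    unfolding has_field_derivative_def by simp
  have u: "Du f z = D (1,0)" unfolding Du_def using d1 by (rule DERIV_imp_deriv)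
  have v: "Dv f z = D (0,1)" unfolding Dv_def using d2 by (rule DERIV_imp_deriv)
  have "D = (\<lambda>h. Du f z * fst h + Dv f z * snd h)"
  proof
    fix h :: pt
    have "h = fst h *\<^sub>R (1,0) + snd h *\<^sub>R (0,1)" by (cases h) auto
    hence "D h = D (fst h *\<^sub>R (1,0)) + D (snd h *\<^sub>R (0,1))"
      using linear_add[OF lin] by metis
    also have "\<dots> = fst h * D (1,0) + snd h * D (0,1)"
      by (simp only: linear_scale[OF lin] real_scaleR_def)
    finally show "D h = Du f z * fst h + Dv f z * snd h" by (simp add: u v mult.commute)
  qed
  thus ?thesis using D by simp
qed

lemma DERIV_comp2:
  assumes "g differentiable (at (\<alpha> t, \<beta> t))"
    and "(\<alpha> has_real_derivative a') (at t)" and "(\<beta> has_real_derivative b') (at t)"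
  shows "((\<lambda>t. g (\<alpha> t, \<beta> t)) has_real_derivative
           (Du g (\<alpha> t, \<beta> t) * a' + Dv g (\<alpha> t, \<beta> t) * b')) (at t)"
proof -
  have c: "((\<lambda>t. (\<alpha> t, \<beta> t)) has_derivative (\<lambda>h. (h * a', h * b'))) (at t)"
  proof -
    have "((\<lambda>t. (\<alpha> t, \<beta> t)) has_derivative (\<lambda>h. (a' * h, b' * h))) (at t)"
      using assms(2,3) unfolding has_field_derivative_def by (rule has_derivative_Pair)
    thus ?thesis by (simp add: mult.commute)
  qed
  have "((\<lambda>t. g (\<alpha> t, \<beta> t)) has_derivative
     (\<lambda>h. Du g (\<alpha> t, \<beta> t) * fst (h * a', h * b') + Dv g (\<alpha> t, \<beta> t) * snd (h * a', h * b'))) (at t)"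
    using has_derivative_compose[OF c partial_has_derivative[OF assms(1)]] by simp
  moreover have "(\<lambda>h. Du g (\<alpha> t, \<beta> t) * fst (h * a', h * b') + Dv g (\<alpha> t, \<beta> t) * snd (h * a', h * b'))
     = (*) (Du g (\<alpha> t, \<beta> t) * a' + Dv g (\<alpha> t, \<beta> t) * b')"
    by (rule ext) (simp add: algebra_simps)
  ultimately show ?thesis unfolding has_field_derivative_def by simp
qed

lemma DERIV_comp2':
  assumes "g differentiable (at (\<alpha> t, \<beta> t))"
    and "(\<alpha> has_real_derivative a') (at t)" and "(\<beta> has_real_derivative b') (at t)"
    and "D = Du g (\<alpha> t, \<beta> t) * a' + Dv g (\<alpha> t, \<beta> t) * b'"
  shows "((\<lambda>t. g (\<alpha> t, \<beta> t)) has_real_derivative D) (at t)"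
  using DERIV_comp2[OF assms(1-3)] assms(4) by simp

lemma Du_DERIV:
  assumes "f differentiable (at (x,y))"
  shows "((\<lambda>t. f (t, y)) has_real_derivative Du f (x,y)) (at x)"
  using DERIV_comp2[where g=f and \<alpha>="\<lambda>t. t" and \<beta>="\<lambda>t. y" and t=x and a'=1 and b'=0,
     OF _ DERIV_ident DERIV_const] assms by simp

lemma Dv_DERIV:
  assumes "f differentiable (at (x,y))"
  shows "((\<lambda>t. f (x, t)) has_real_derivative Dv f (x,y)) (at y)"
  using DERIV_comp2[where g=f and \<alpha>="\<lambda>t. x" and \<beta>="\<lambda>t. t" and t=y and a'=0 and b'=1,
     OF _ DERIV_const DERIV_ident] assms by simp


lemma pderivs_snoc: "pderivs (bs @ [b]) f = pderivs bs (if b then Du f else Dv f)"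
  by (induction bs) auto

definition Ck :: "pt set \<Rightarrow> nat \<Rightarrow> (pt \<Rightarrow> real) \<Rightarrow> bool" where
  "Ck S n f \<longleftrightarrow> (\<forall>bs. length bs \<le> n \<longrightarrow> (\<forall>x\<in>S. pderivs bs f differentiable (at x)))"

lemma Ck_0: "Ck S 0 f \<longleftrightarrow> (\<forall>x\<in>S. f differentiable (at x))"
  unfolding Ck_def by auto

lemma Ck_Suc: "Ck S (Suc n) f \<longleftrightarrow> (\<forall>x\<in>S. f differentiable (at x)) \<and> Ck S n (Du f) \<and> Ck S n (Dv f)"
proof
  assume a: "Ck S (Suc n) f"
  have "\<forall>x\<in>S. f differentiable (at x)" using a[unfolded Ck_def, rule_format, of "[]"] by auto
  moreover have "Ck S n (Du f)" unfolding Ck_def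
  proof (intro allI impI ballI)
    fix bs :: "bool list" and x assume "length bs \<le> n" "x \<in> S"
    thus "pderivs bs (Du f) differentiable (at x)"
      using a[unfolded Ck_def, rule_format, of "bs @ [True]" x] by (simp add: pderivs_snoc)
  qed
  moreover have "Ck S n (Dv f)" unfolding Ck_def
  proof (intro allI impI ballI)
    fix bs :: "bool list" and x assume "length bs \<le> n" "x \<in> S"
    thus "pderivs bs (Dv f) differentiable (at x)"
      using a[unfolded Ck_def, rule_format, of "bs @ [False]" x] by (simp add: pderivs_snoc)
  qed
  ultimately show "(\<forall>x\<in>S. f differentiable (at x)) \<and> Ck S n (Du f) \<and> Ck S n (Dv f)" by blast
next
  assume a: "(\<forall>x\<in>S. f differentiable (at x)) \<and> Ck S n (Du f) \<and> Ck S n (Dv f)"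
  show "Ck S (Suc n) f" unfolding Ck_def
  proof (intro allI impI ballI)
    fix bs :: "bool list" and x assume l: "length bs \<le> Suc n" and x: "x \<in> S"
    show "pderivs bs f differentiable (at x)"
    proof (cases bs rule: rev_cases)
      case Nil thus ?thesis using a x by simp
    next
      case (snoc cs b)
      thus ?thesis using a l x unfolding Ck_def by (cases b) (auto simp: pderivs_snoc)
    qed
  qed
qed

lemma Ck_diff: "Ck S n f \<Longrightarrow> x \<in> S \<Longrightarrow> f differentiable (at x)"
  unfolding Ck_def by (metis le0 list.size(3) pderivs.simps(1))

lemma Ck_mono: "Ck S (Suc n) f \<Longrightarrow> Ck S n f"
  unfolding Ck_def by auto

lemma Ck_mono_le: "Ck S m f \<Longrightarrow> n \<le> m \<Longrightarrow> Ck S n f"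
  unfolding Ck_def by auto

lemma smooth2_Ck: "smooth2_on S f \<longleftrightarrow> (\<forall>n. Ck S n f)"
  unfolding smooth2_on_def Ck_def by (metis order_refl)

lemma smooth2_Du: "smooth2_on S f \<Longrightarrow> smooth2_on S (Du f)"
  unfolding smooth2_Ck by (metis Ck_Suc)
lemma smooth2_Dv: "smooth2_on S f \<Longrightarrow> smooth2_on S (Dv f)"
  unfolding smooth2_Ck by (metis Ck_Suc)
lemma smooth2_diff: "smooth2_on S f \<Longrightarrow> x \<in> S \<Longrightarrow> f differentiable (at x)"
  unfolding smooth2_on_def by (metis pderivs.simps(1))

lemma smooth2_Ck': "smooth2_on S f \<Longrightarrow> Ck S n f"
  unfolding smooth2_Ck by blast

lemma eventually_line_u:
  fixes S :: "pt set" and x :: pt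
  assumes "open S" "x \<in> S"
  shows "eventually (\<lambda>t. (t, snd x) \<in> S) (nhds (fst x))"
proof -
  obtain e where e: "e > 0" "ball x e \<subseteq> S" using assms open_contains_ball by blast
  show ?thesis unfolding eventually_nhds_metric
  proof (intro exI[of _ e] conjI allI impI)
    fix t assume "dist t (fst x) < e"
    hence "dist (t, snd x) x < e" by (cases x) (simp add: dist_Pair_Pair)
    thus "(t, snd x) \<in> S" using e by (auto simp: dist_commute)
  qed (use e in auto)
qed


lemma eventually_line_v:
  fixes S :: "pt set" and x :: pt
  assumes "open S" "x \<in> S"
  shows "eventually (\<lambda>t. (fst x, t) \<in> S) (nhds (snd x))"
proof -
  obtain e where e: "e > 0" "ball x e \<subseteq> S" using assms open_contains_ball by blast
  show ?thesis unfolding eventually_nhds_metric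
  proof (intro exI[of _ e] conjI allI impI)
    fix t assume "dist t (snd x) < e"
    hence "dist (fst x, t) x < e" by (cases x) (simp add: dist_Pair_Pair)
    thus "(fst x, t) \<in> S" using e by (auto simp: dist_commute)
  qed (use e in auto)
qed

lemma Du_cong:
  assumes "open S" "x \<in> S" "\<And>y. y \<in> S \<Longrightarrow> f y = g y"
  shows "Du f x = Du g x"
  unfolding Du_def
  by (rule deriv_cong_ev) (use eventually_line_u[OF assms(1,2)] assms(3) in \<open>auto elim: eventually_mono\<close>)

lemma Dv_cong:
  assumes "open S" "x \<in> S" "\<And>y. y \<in> S \<Longrightarrow> f y = g y"
  shows "Dv f x = Dv g x"
  unfolding Dv_def
  by (rule deriv_cong_ev) (use eventually_line_v[OF assms(1,2)] assms(3) in \<open>auto elim: eventually_mono\<close>)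

lemma pderivs_cong0:
  assumes "open S" "\<And>y. y \<in> S \<Longrightarrow> f y = g y"
  shows "\<forall>x\<in>S. pderivs bs f x = pderivs bs g x"
proof (induction bs)
  case Nil thus ?case using assms by simp
next
  case (Cons b bs)
  have h: "\<And>y. y \<in> S \<Longrightarrow> pderivs bs f y = pderivs bs g y" using Cons.IH by blast
  show ?case
  proof
    fix x assume x: "x \<in> S"
    show "pderivs (b # bs) f x = pderivs (b # bs) g x"
      using Du_cong[OF assms(1) x h] Dv_cong[OF assms(1) x h] by simp
  qed
qed

lemma pderivs_cong:
  assumes "open S" "\<And>y. y \<in> S \<Longrightarrow> f y = g y" "x \<in> S"
  shows "pderivs bs f x = pderivs bs g x"
proof -
  have "\<forall>x\<in>S. pderivs bs f x = pderivs bs g x" by (rule pderivs_cong0) (use assms(1,2) in auto)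
  thus ?thesis using assms(3) by blast
qed

lemma differentiable_cong:
  assumes "open S" "x \<in> S" "\<And>y. y \<in> S \<Longrightarrow> f y = g y" "f differentiable (at x)"
  shows "g differentiable (at x)"
proof -
  obtain D where D: "(f has_derivative D) (at x)" using assms(4) unfolding differentiable_def by blast
  have "(g has_derivative D) (at x)" by (rule has_derivative_transform_within_open[OF D assms(1,2)]) (rule assms(3))
  thus ?thesis unfolding differentiable_def by blast
qed

lemma Ck_cong:
  assumes "open S" "\<And>y. y \<in> S \<Longrightarrow> f y = g y" "Ck S n f"
  shows "Ck S n g"
  unfolding Ck_def
proof (intro allI impI ballI)
  fix bs :: "bool list" and x assume l: "length bs \<le> n" and x: "x \<in> S"
  have e0: "\<forall>y\<in>S. pderivs bs f y = pderivs bs g y" by (rule pderivs_cong0) (use assms(1,2) in auto)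
  hence e: "\<And>y. y \<in> S \<Longrightarrow> pderivs bs f y = pderivs bs g y" by blast
  have d: "pderivs bs f differentiable (at x)" using assms(3) l x unfolding Ck_def by blast
  show "pderivs bs g differentiable (at x)" by (rule differentiable_cong[OF assms(1) x e d])
qed

lemma Ck_cong':
  assumes "open S" "Ck S n f" "\<And>y. y \<in> S \<Longrightarrow> g y = f y"
  shows "Ck S n g"
  by (rule Ck_cong[OF assms(1) _ assms(2)]) (simp add: assms(3))

lemma Du_DERIV': "f differentiable (at x) \<Longrightarrow> ((\<lambda>t. f (t, snd x)) has_real_derivative Du f x) (at (fst x))"
  using Du_DERIV[of f "fst x" "snd x"] by simp
lemma Dv_DERIV': "f differentiable (at x) \<Longrightarrow> ((\<lambda>t. f (fst x, t)) has_real_derivative Dv f x) (at (snd x))"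
  using Dv_DERIV[of f "fst x" "snd x"] by simp

lemma Du_eqI: "((\<lambda>t. f (t, snd x)) has_real_derivative D) (at (fst x)) \<Longrightarrow> Du f x = D"
  unfolding Du_def by (rule DERIV_imp_deriv)
lemma Dv_eqI: "((\<lambda>t. f (fst x, t)) has_real_derivative D) (at (snd x)) \<Longrightarrow> Dv f x = D"
  unfolding Dv_def by (rule DERIV_imp_deriv)

lemma Du_const[simp]: "Du (\<lambda>y. c) = (\<lambda>y. 0)" unfolding Du_def by auto
lemma Dv_const[simp]: "Dv (\<lambda>y. c) = (\<lambda>y. 0)" unfolding Dv_def by auto

lemma Du_add: "f differentiable (at x) \<Longrightarrow> g differentiable (at x) \<Longrightarrow> Du (\<lambda>y. f y + g y) x = Du f x + Du g x"
  by (rule Du_eqI, rule DERIV_add; rule Du_DERIV')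
lemma Dv_add: "f differentiable (at x) \<Longrightarrow> g differentiable (at x) \<Longrightarrow> Dv (\<lambda>y. f y + g y) x = Dv f x + Dv g x"
  by (rule Dv_eqI, rule DERIV_add; rule Dv_DERIV')
lemma Du_diff: "f differentiable (at x) \<Longrightarrow> g differentiable (at x) \<Longrightarrow> Du (\<lambda>y. f y - g y) x = Du f x - Du g x"
  by (rule Du_eqI, rule DERIV_diff; rule Du_DERIV')
lemma Dv_diff: "f differentiable (at x) \<Longrightarrow> g differentiable (at x) \<Longrightarrow> Dv (\<lambda>y. f y - g y) x = Dv f x - Dv g x"
  by (rule Dv_eqI, rule DERIV_diff; rule Dv_DERIV')
lemma Du_mult: "f differentiable (at x) \<Longrightarrow> g differentiable (at x) \<Longrightarrow> Du (\<lambda>y. f y * g y) x = Du f x * g x + f x * Du g x"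
proof -
  assume a: "f differentiable (at x)" "g differentiable (at x)"
  have "((\<lambda>t. f (t, snd x) * g (t, snd x)) has_real_derivative f (fst x, snd x) * Du g x + Du f x * g (fst x, snd x)) (at (fst x))"
    by (rule DERIV_mult'[OF Du_DERIV'[OF a(1)] Du_DERIV'[OF a(2)]])
  hence "((\<lambda>t. f (t, snd x) * g (t, snd x)) has_real_derivative Du f x * g x + f x * Du g x) (at (fst x))"
    by (simp add: algebra_simps)
  thus ?thesis by (rule Du_eqI)
qed
lemma Dv_mult: "f differentiable (at x) \<Longrightarrow> g differentiable (at x) \<Longrightarrow> Dv (\<lambda>y. f y * g y) x = Dv f x * g x + f x * Dv g x"
proof -
  assume a: "f differentiable (at x)" "g differentiable (at x)"
  have "((\<lambda>t. f (fst x, t) * g (fst x, t)) has_real_derivative f (fst x, snd x) * Dv g x + Dv f x * g (fst x, snd x)) (at (snd x))"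
    by (rule DERIV_mult'[OF Dv_DERIV'[OF a(1)] Dv_DERIV'[OF a(2)]])
  hence "((\<lambda>t. f (fst x, t) * g (fst x, t)) has_real_derivative Dv f x * g x + f x * Dv g x) (at (snd x))"
    by (simp add: algebra_simps)
  thus ?thesis by (rule Dv_eqI)
qed

lemma Du_comp:
  assumes "g differentiable (at (a x, b x))" "a differentiable (at x)" "b differentiable (at x)"
  shows "Du (\<lambda>y. g (a y, b y)) x = Du g (a x, b x) * Du a x + Dv g (a x, b x) * Du b x"
proof -
  have x: "(fst x, snd x) = x" by simp
  have g: "g differentiable (at (a (fst x, snd x), b (fst x, snd x)))" unfolding x by (rule assms(1))
  have "((\<lambda>t. g (a (t, snd x), b (t, snd x))) has_real_derivative
     Du g (a (fst x, snd x), b (fst x, snd x)) * Du a x + Dv g (a (fst x, snd x), b (fst x, snd x)) * Du b x) (at (fst x))"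
    by (rule DERIV_comp2[where \<alpha>="\<lambda>t. a (t, snd x)" and \<beta>="\<lambda>t. b (t, snd x)", OF g Du_DERIV'[OF assms(2)] Du_DERIV'[OF assms(3)]])
  thus ?thesis unfolding x by (rule Du_eqI)
qed
lemma Dv_comp:
  assumes "g differentiable (at (a x, b x))" "a differentiable (at x)" "b differentiable (at x)"
  shows "Dv (\<lambda>y. g (a y, b y)) x = Du g (a x, b x) * Dv a x + Dv g (a x, b x) * Dv b x"
proof -
  have x: "(fst x, snd x) = x" by simp
  have g: "g differentiable (at (a (fst x, snd x), b (fst x, snd x)))" unfolding x by (rule assms(1))
  have "((\<lambda>t. g (a (fst x, t), b (fst x, t))) has_real_derivative
     Du g (a (fst x, snd x), b (fst x, snd x)) * Dv a x + Dv g (a (fst x, snd x), b (fst x, snd x)) * Dv b x) (at (snd x))"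
    by (rule DERIV_comp2[where \<alpha>="\<lambda>t. a (fst x, t)" and \<beta>="\<lambda>t. b (fst x, t)", OF g Dv_DERIV'[OF assms(2)] Dv_DERIV'[OF assms(3)]])
  thus ?thesis unfolding x by (rule Dv_eqI)
qed

lemma diff_comp:
  assumes "g differentiable (at (a x, b x))" "a differentiable (at x)" "b differentiable (at x)"
  shows "(\<lambda>y. g (a y, b y)) differentiable (at x)"
proof -
  have "(\<lambda>y. (a y, b y)) differentiable (at x)" using assms(2,3) by (rule differentiable_Pair)
  thus ?thesis using differentiable_chain_at[of "\<lambda>y. (a y, b y)" x g] assms(1) by (simp add: o_def)
qed

lemma Ck_const: "Ck S n (\<lambda>y. c)"
proof (induction n arbitrary: c)
  case 0 thus ?case by (simp add: Ck_0)
next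
  case (Suc n) thus ?case by (simp add: Ck_Suc)
qed

lemma Ck_add: "open S \<Longrightarrow> Ck S n f \<Longrightarrow> Ck S n g \<Longrightarrow> Ck S n (\<lambda>y. f y + g y)"
proof (induction n arbitrary: f g)
  case 0 thus ?case by (auto simp: Ck_0)
next
  case (Suc n)
  hence d: "\<And>x. x \<in> S \<Longrightarrow> f differentiable (at x) \<and> g differentiable (at x)" by (auto simp: Ck_Suc)
  have hh: "Ck S n (\<lambda>y. Du f y + Du g y)" "Ck S n (\<lambda>y. Dv f y + Dv g y)" using Suc by (auto simp: Ck_Suc)
  have "Ck S n (Du (\<lambda>y. f y + g y))"
  proof (rule Ck_cong'[OF Suc.prems(1) hh(1)])
    fix y assume "y \<in> S" thus "Du (\<lambda>y. f y + g y) y = Du f y + Du g y" using d by (simp add: Du_add)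
  qed
  moreover have "Ck S n (Dv (\<lambda>y. f y + g y))"
  proof (rule Ck_cong'[OF Suc.prems(1) hh(2)])
    fix y assume "y \<in> S" thus "Dv (\<lambda>y. f y + g y) y = Dv f y + Dv g y" using d by (simp add: Dv_add)
  qed
  ultimately have "Ck S n (Du (\<lambda>y. f y + g y))" "Ck S n (Dv (\<lambda>y. f y + g y))" by blast+
  thus ?case using d by (auto simp: Ck_Suc)
qed

lemma Ck_diffop: "open S \<Longrightarrow> Ck S n f \<Longrightarrow> Ck S n g \<Longrightarrow> Ck S n (\<lambda>y. f y - g y)"
proof (induction n arbitrary: f g)
  case 0 thus ?case by (auto simp: Ck_0)
next
  case (Suc n)
  hence d: "\<And>x. x \<in> S \<Longrightarrow> f differentiable (at x) \<and> g differentiable (at x)" by (auto simp: Ck_Suc)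
  have hh: "Ck S n (\<lambda>y. Du f y - Du g y)" "Ck S n (\<lambda>y. Dv f y - Dv g y)" using Suc by (auto simp: Ck_Suc)
  have "Ck S n (Du (\<lambda>y. f y - g y))"
  proof (rule Ck_cong'[OF Suc.prems(1) hh(1)])
    fix y assume "y \<in> S" thus "Du (\<lambda>y. f y - g y) y = Du f y - Du g y" using d by (simp add: Du_diff)
  qed
  moreover have "Ck S n (Dv (\<lambda>y. f y - g y))"
  proof (rule Ck_cong'[OF Suc.prems(1) hh(2)])
    fix y assume "y \<in> S" thus "Dv (\<lambda>y. f y - g y) y = Dv f y - Dv g y" using d by (simp add: Dv_diff)
  qed
  ultimately have "Ck S n (Du (\<lambda>y. f y - g y))" "Ck S n (Dv (\<lambda>y. f y - g y))" by blast+
  thus ?case using d by (auto simp: Ck_Suc)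
qed

lemma Ck_mult: "open S \<Longrightarrow> Ck S n f \<Longrightarrow> Ck S n g \<Longrightarrow> Ck S n (\<lambda>y. f y * g y)"
proof (induction n arbitrary: f g)
  case 0 thus ?case by (auto simp: Ck_0)
next
  case (Suc n)
  hence d: "\<And>x. x \<in> S \<Longrightarrow> f differentiable (at x) \<and> g differentiable (at x)" by (auto simp: Ck_Suc)
  have fn: "Ck S n f" "Ck S n g" using Suc.prems Ck_mono by auto
  have hh: "Ck S n (\<lambda>y. Du f y * g y + f y * Du g y)" "Ck S n (\<lambda>y. Dv f y * g y + f y * Dv g y)"
    using Suc fn by (auto simp: Ck_Suc intro!: Ck_add)
  have "Ck S n (Du (\<lambda>y. f y * g y))"
  proof (rule Ck_cong'[OF Suc.prems(1) hh(1)])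
    fix y assume "y \<in> S" thus "Du (\<lambda>y. f y * g y) y = Du f y * g y + f y * Du g y" using d by (simp add: Du_mult)
  qed
  moreover have "Ck S n (Dv (\<lambda>y. f y * g y))"
  proof (rule Ck_cong'[OF Suc.prems(1) hh(2)])
    fix y assume "y \<in> S" thus "Dv (\<lambda>y. f y * g y) y = Dv f y * g y + f y * Dv g y" using d by (simp add: Dv_mult)
  qed
  ultimately have "Ck S n (Du (\<lambda>y. f y * g y))" "Ck S n (Dv (\<lambda>y. f y * g y))" by blast+
  thus ?case using d by (auto simp: Ck_Suc)
qed

lemma Ck_comp:
  assumes S: "open S" and T: "open T" and into: "\<And>x. x \<in> S \<Longrightarrow> (a x, b x) \<in> T"
    and a: "smooth2_on S a" and b: "smooth2_on S b"
  shows "Ck T n g \<Longrightarrow> Ck S n (\<lambda>y. g (a y, b y))"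
proof (induction n arbitrary: g)
  case 0 thus ?case using into smooth2_diff[OF a] smooth2_diff[OF b] by (auto simp: Ck_0 intro!: diff_comp)
next
  case (Suc n)
  have dg: "\<And>x. x \<in> S \<Longrightarrow> g differentiable (at (a x, b x))" using Suc.prems into by (auto simp: Ck_Suc)
  have gn: "Ck T n (Du g)" "Ck T n (Dv g)" using Suc.prems by (auto simp: Ck_Suc)
  have an: "Ck S n (Du a)" "Ck S n (Dv a)" "Ck S n (Du b)" "Ck S n (Dv b)"
    using a b smooth2_Ck' smooth2_Du smooth2_Dv by blast+
  have hh: "Ck S n (\<lambda>y. Du g (a y, b y) * Du a y + Dv g (a y, b y) * Du b y)"
       "Ck S n (\<lambda>y. Du g (a y, b y) * Dv a y + Dv g (a y, b y) * Dv b y)"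
    using Suc.IH[OF gn(1)] Suc.IH[OF gn(2)] an by (auto intro!: Ck_add Ck_mult S)
  have "Ck S n (Du (\<lambda>y. g (a y, b y)))"
  proof (rule Ck_cong'[OF S hh(1)])
    fix y assume y: "y \<in> S"
    show "Du (\<lambda>y. g (a y, b y)) y = Du g (a y, b y) * Du a y + Dv g (a y, b y) * Du b y"
      by (rule Du_comp[OF dg[OF y] smooth2_diff[OF a y] smooth2_diff[OF b y]])
  qed
  moreover have "Ck S n (Dv (\<lambda>y. g (a y, b y)))"
  proof (rule Ck_cong'[OF S hh(2)])
    fix y assume y: "y \<in> S"
    show "Dv (\<lambda>y. g (a y, b y)) y = Du g (a y, b y) * Dv a y + Dv g (a y, b y) * Dv b y"
      by (rule Dv_comp[OF dg[OF y] smooth2_diff[OF a y] smooth2_diff[OF b y]])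
  qed
  ultimately have "Ck S n (Du (\<lambda>y. g (a y, b y)))" "Ck S n (Dv (\<lambda>y. g (a y, b y)))" by blast+
  thus ?case using dg smooth2_diff[OF a] smooth2_diff[OF b] by (auto simp: Ck_Suc intro!: diff_comp)
qed

lemma smooth2_const: "smooth2_on S (\<lambda>y. c)" by (simp add: smooth2_Ck Ck_const)
lemma smooth2_add: "open S \<Longrightarrow> smooth2_on S f \<Longrightarrow> smooth2_on S g \<Longrightarrow> smooth2_on S (\<lambda>y. f y + g y)"
  unfolding smooth2_Ck using Ck_add by blast
lemma smooth2_sub: "open S \<Longrightarrow> smooth2_on S f \<Longrightarrow> smooth2_on S g \<Longrightarrow> smooth2_on S (\<lambda>y. f y - g y)"
  unfolding smooth2_Ck using Ck_diffop by blast
lemma smooth2_mult: "open S \<Longrightarrow> smooth2_on S f \<Longrightarrow> smooth2_on S g \<Longrightarrow> smooth2_on S (\<lambda>y. f y * g y)"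
  unfolding smooth2_Ck using Ck_mult by blast
lemma smooth2_comp:
  assumes "open S" "open T" "\<And>x. x \<in> S \<Longrightarrow> (a x, b x) \<in> T" "smooth2_on S a" "smooth2_on S b" "smooth2_on T g"
  shows "smooth2_on S (\<lambda>y. g (a y, b y))"
  unfolding smooth2_Ck
proof
  fix n
  have "Ck T n g" using assms(6) by (simp add: smooth2_Ck)
  thus "Ck S n (\<lambda>y. g (a y, b y))" using Ck_comp[of S T a b n g] assms(1-5) by blast
qed
lemma smooth2_subset: "smooth2_on T f \<Longrightarrow> S \<subseteq> T \<Longrightarrow> smooth2_on S f"
  unfolding smooth2_on_def by blast
lemma smooth2_cong:
  assumes "open S" "\<And>y. y \<in> S \<Longrightarrow> f y = g y" "smooth2_on S f"
  shows "smooth2_on S g"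
  unfolding smooth2_Ck
proof
  fix n
  have c: "Ck S n f" using assms(3) by (simp add: smooth2_Ck)
  show "Ck S n g" by (rule Ck_cong[where f=f and g=g]) (use assms c in auto)
qed


lemma square_dist:
  fixes x0 y0 s t h :: real
  assumes "h > 0" "x0 \<le> s" "s \<le> x0 + h" "y0 \<le> t" "t \<le> y0 + h"
  shows "dist (s, t) (x0, y0) < 2 * h"
proof -
  have "(s - x0)\<^sup>2 \<le> h\<^sup>2" "(t - y0)\<^sup>2 \<le> h\<^sup>2"
    using assms by (intro power_mono; simp)+
  moreover have "0 < h\<^sup>2" using assms(1) by simp
  moreover have "(2 * h)\<^sup>2 = 4 * h\<^sup>2" by (simp add: power_mult_distrib)
  ultimately have lt: "(s - x0)\<^sup>2 + (t - y0)\<^sup>2 < (2 * h)\<^sup>2" by linarith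
  have "dist (s, t) (x0, y0) = sqrt ((s - x0)\<^sup>2 + (t - y0)\<^sup>2)"
    by (simp add: dist_Pair_Pair dist_real_def)
  also have "\<dots> < sqrt ((2 * h)\<^sup>2)" by (rule real_sqrt_less_mono[OF lt])
  also have "\<dots> = 2 * h" using assms(1) by (simp only: real_sqrt_abs)
  finally show ?thesis .
qed

lemma schwarz:
  assumes S: "open S" and f: "smooth2_on S f" and x: "x \<in> S"
  shows "Du (Dv f) x = Dv (Du f) x"
proof -
  define g1 where "g1 = Dv (Du f)"
  define g2 where "g2 = Du (Dv f)"
  have sf: "\<And>z. z \<in> S \<Longrightarrow> f differentiable (at z)" using smooth2_diff[OF f] .
  have sfu: "\<And>z. z \<in> S \<Longrightarrow> Du f differentiable (at z)" using smooth2_diff[OF smooth2_Du[OF f]] .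
  have sfv: "\<And>z. z \<in> S \<Longrightarrow> Dv f differentiable (at z)" using smooth2_diff[OF smooth2_Dv[OF f]] .
  have cg1: "continuous (at x) g1" unfolding g1_def
    by (rule differentiable_imp_continuous_within, rule smooth2_diff[OF smooth2_Dv[OF smooth2_Du[OF f]] x])
  have cg2: "continuous (at x) g2" unfolding g2_def
    by (rule differentiable_imp_continuous_within, rule smooth2_diff[OF smooth2_Du[OF smooth2_Dv[OF f]] x])
  obtain x0 y0 where xe: "x = (x0, y0)" by (cases x)
  obtain e where e: "e > 0" "ball x e \<subseteq> S" using S x open_contains_ball by blast
  have "\<forall>\<epsilon>>0. \<bar>g1 x - g2 x\<bar> < \<epsilon>"
  proof (intro allI impI)
    fix \<epsilon> :: real assume \<epsilon>: "\<epsilon> > 0"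
    obtain d1 where d1: "d1 > 0" "\<And>z. dist z x < d1 \<Longrightarrow> dist (g1 z) (g1 x) < \<epsilon>/2"
      using cg1 \<epsilon> unfolding continuous_at_eps_delta by (metis half_gt_zero)
    obtain d2 where d2: "d2 > 0" "\<And>z. dist z x < d2 \<Longrightarrow> dist (g2 z) (g2 x) < \<epsilon>/2"
      using cg2 \<epsilon> unfolding continuous_at_eps_delta by (metis half_gt_zero)
    define h where "h = min e (min d1 d2) / 2"
    have h: "h > 0" using e d1 d2 by (simp add: h_def)
    have inS: "(s, t) \<in> S" if "x0 \<le> s" "s \<le> x0 + h" "y0 \<le> t" "t \<le> y0 + h" for s t
    proof -
      have "dist (s, t) x < 2 * h" using square_dist[OF h that] xe by simp
      hence "dist x (s, t) < e" by (simp add: h_def dist_commute)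
      thus ?thesis using e by auto
    qed
    have near: "dist (s, t) x < d1 \<and> dist (s, t) x < d2" if "x0 \<le> s" "s \<le> x0 + h" "y0 \<le> t" "t \<le> y0 + h" for s t
    proof -
      have "dist (s, t) x < 2 * h" using square_dist[OF h that] xe by simp
      thus ?thesis by (simp add: h_def)
    qed
    define \<Delta> where "\<Delta> = f (x0 + h, y0 + h) - f (x0 + h, y0) - f (x0, y0 + h) + f (x0, y0)"
    have "\<exists>\<xi>. x0 < \<xi> \<and> \<xi> < x0 + h \<and>
      (f (x0 + h, y0 + h) - f (x0 + h, y0)) - (f (x0, y0 + h) - f (x0, y0)) = (x0 + h - x0) * (Du f (\<xi>, y0 + h) - Du f (\<xi>, y0))"
    proof (rule MVT2)
      show "x0 < x0 + h" using h by simp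
      fix s assume s: "x0 \<le> s" "s \<le> x0 + h"
      have a: "(s, y0 + h) \<in> S" "(s, y0) \<in> S" using inS s h by auto
      show "((\<lambda>s. f (s, y0 + h) - f (s, y0)) has_real_derivative Du f (s, y0 + h) - Du f (s, y0)) (at s)"
        by (rule DERIV_diff[OF Du_DERIV[OF sf[OF a(1)]] Du_DERIV[OF sf[OF a(2)]]])
    qed
    then obtain \<xi> where \<xi>: "x0 < \<xi>" "\<xi> < x0 + h" "\<Delta> = h * (Du f (\<xi>, y0 + h) - Du f (\<xi>, y0))"
      unfolding \<Delta>_def by (auto simp: algebra_simps)
    have "\<exists>\<eta>. y0 < \<eta> \<and> \<eta> < y0 + h \<and> Du f (\<xi>, y0 + h) - Du f (\<xi>, y0) = (y0 + h - y0) * g1 (\<xi>, \<eta>)"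
    proof (rule MVT2)
      show "y0 < y0 + h" using h by simp
      fix t assume t: "y0 \<le> t" "t \<le> y0 + h"
      have a: "(\<xi>, t) \<in> S" using inS t \<xi> by auto
      show "((\<lambda>t. Du f (\<xi>, t)) has_real_derivative g1 (\<xi>, t)) (at t)"
        unfolding g1_def by (rule Dv_DERIV[OF sfu[OF a]])
    qed
    then obtain \<eta> where \<eta>: "y0 < \<eta>" "\<eta> < y0 + h" "Du f (\<xi>, y0 + h) - Du f (\<xi>, y0) = h * g1 (\<xi>, \<eta>)"
      by auto
    have "\<exists>\<eta>'. y0 < \<eta>' \<and> \<eta>' < y0 + h \<and>
      (f (x0 + h, y0 + h) - f (x0, y0 + h)) - (f (x0 + h, y0) - f (x0, y0)) = (y0 + h - y0) * (Dv f (x0 + h, \<eta>') - Dv f (x0, \<eta>'))"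
    proof (rule MVT2)
      show "y0 < y0 + h" using h by simp
      fix t assume t: "y0 \<le> t" "t \<le> y0 + h"
      have a: "(x0 + h, t) \<in> S" "(x0, t) \<in> S" using inS t h by auto
      show "((\<lambda>t. f (x0 + h, t) - f (x0, t)) has_real_derivative Dv f (x0 + h, t) - Dv f (x0, t)) (at t)"
        by (rule DERIV_diff[OF Dv_DERIV[OF sf[OF a(1)]] Dv_DERIV[OF sf[OF a(2)]]])
    qed
    then obtain \<eta>' where \<eta>': "y0 < \<eta>'" "\<eta>' < y0 + h" "\<Delta> = h * (Dv f (x0 + h, \<eta>') - Dv f (x0, \<eta>'))"
      unfolding \<Delta>_def by (auto simp: algebra_simps)
    have "\<exists>\<xi>'. x0 < \<xi>' \<and> \<xi>' < x0 + h \<and> Dv f (x0 + h, \<eta>') - Dv f (x0, \<eta>') = (x0 + h - x0) * g2 (\<xi>', \<eta>')"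
    proof (rule MVT2)
      show "x0 < x0 + h" using h by simp
      fix s assume s: "x0 \<le> s" "s \<le> x0 + h"
      have a: "(s, \<eta>') \<in> S" using inS s \<eta>' by auto
      show "((\<lambda>s. Dv f (s, \<eta>')) has_real_derivative g2 (s, \<eta>')) (at s)"
        unfolding g2_def by (rule Du_DERIV[OF sfv[OF a]])
    qed
    then obtain \<xi>' where \<xi>': "x0 < \<xi>'" "\<xi>' < x0 + h" "Dv f (x0 + h, \<eta>') - Dv f (x0, \<eta>') = h * g2 (\<xi>', \<eta>')"
      by auto
    have "h * (h * g1 (\<xi>, \<eta>)) = h * (h * g2 (\<xi>', \<eta>'))" using \<xi>(3) \<eta>(3) \<eta>'(3) \<xi>'(3) by (simp, metis)
    hence eq: "g1 (\<xi>, \<eta>) = g2 (\<xi>', \<eta>')" using h by simp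
    have n1: "dist (\<xi>, \<eta>) x < d1" using near[of \<xi> \<eta>] \<xi> \<eta> by auto
    have n2: "dist (\<xi>', \<eta>') x < d2" using near[of \<xi>' \<eta>'] \<xi>' \<eta>' by auto
    have "\<bar>g1 (\<xi>, \<eta>) - g1 x\<bar> < \<epsilon>/2" using d1(2)[OF n1] by (simp add: dist_real_def)
    moreover have "\<bar>g2 (\<xi>', \<eta>') - g2 x\<bar> < \<epsilon>/2" using d2(2)[OF n2] by (simp add: dist_real_def)
    ultimately show "\<bar>g1 x - g2 x\<bar> < \<epsilon>" using eq by linarith
  qed
  hence "g1 x = g2 x"
  proof (rule contrapos_pp)
    assume "g1 x \<noteq> g2 x"
    hence "0 < \<bar>g1 x - g2 x\<bar>" by simp
    thus "\<not> (\<forall>\<epsilon>>0. \<bar>g1 x - g2 x\<bar> < \<epsilon>)" using less_irrefl by blast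
  qed
  thus ?thesis by (simp add: g1_def g2_def)
qed


lemma ip_sym: "ip E0 F0 G0 x a b = ip E0 F0 G0 x b a"
  unfolding ip_def by (simp add: algebra_simps)

lemma ip_lin: "ip E0 F0 G0 x (c *\<^sub>R a + d *\<^sub>R b) w = c * ip E0 F0 G0 x a w + d * ip E0 F0 G0 x b w"
  unfolding ip_def by (simp add: algebra_simps)

lemma smoothV_fst: "smoothV_on V phi \<Longrightarrow> smooth2_on V (\<lambda>y. fst (phi y))"
  unfolding smoothV_on_def by blast
lemma smoothV_snd: "smoothV_on V phi \<Longrightarrow> smooth2_on V (\<lambda>y. snd (phi y))"
  unfolding smoothV_on_def by blast

lemma smooth2_comp_phi:
  assumes "open V" "open U" "phi ` V \<subseteq> U" "smoothV_on V phi" "smooth2_on U g"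
  shows "smooth2_on V (\<lambda>y. g (phi y))"
proof -
  have "smooth2_on V (\<lambda>y. g (fst (phi y), snd (phi y)))"
  proof (rule smooth2_comp[OF assms(1,2)])
    fix x assume "x \<in> V" thus "(fst (phi x), snd (phi x)) \<in> U" using assms(3) by auto
  qed (use assms smoothV_fst smoothV_snd in auto)
  thus ?thesis by simp
qed

lemma cE_eq: "cE E0 F0 G0 phi x = E0 (phi x) * Du (\<lambda>y. fst (phi y)) x * Du (\<lambda>y. fst (phi y)) x
   + F0 (phi x) * (Du (\<lambda>y. fst (phi y)) x * Du (\<lambda>y. snd (phi y)) x + Du (\<lambda>y. snd (phi y)) x * Du (\<lambda>y. fst (phi y)) x)
   + G0 (phi x) * Du (\<lambda>y. snd (phi y)) x * Du (\<lambda>y. snd (phi y)) x"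
  unfolding cE_def ip_def DuV_def by simp
lemma cF_eq: "cF E0 F0 G0 phi x = E0 (phi x) * Du (\<lambda>y. fst (phi y)) x * Dv (\<lambda>y. fst (phi y)) x
   + F0 (phi x) * (Du (\<lambda>y. fst (phi y)) x * Dv (\<lambda>y. snd (phi y)) x + Du (\<lambda>y. snd (phi y)) x * Dv (\<lambda>y. fst (phi y)) x)
   + G0 (phi x) * Du (\<lambda>y. snd (phi y)) x * Dv (\<lambda>y. snd (phi y)) x"
  unfolding cF_def ip_def DuV_def DvV_def by simp
lemma cG_eq: "cG E0 F0 G0 phi x = E0 (phi x) * Dv (\<lambda>y. fst (phi y)) x * Dv (\<lambda>y. fst (phi y)) x
   + F0 (phi x) * (Dv (\<lambda>y. fst (phi y)) x * Dv (\<lambda>y. snd (phi y)) x + Dv (\<lambda>y. snd (phi y)) x * Dv (\<lambda>y. fst (phi y)) x)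
   + G0 (phi x) * Dv (\<lambda>y. snd (phi y)) x * Dv (\<lambda>y. snd (phi y)) x"
  unfolding cG_def ip_def DvV_def by simp

lemma smooth_coeffs:
  assumes psd: "psd_metric U E0 F0 G0" and V: "open V" and sub: "phi ` V \<subseteq> U" and sm: "smoothV_on V phi"
  shows "smooth2_on V (cE E0 F0 G0 phi)" "smooth2_on V (cF E0 F0 G0 phi)" "smooth2_on V (cG E0 F0 G0 phi)"
proof -
  have U: "open U" and sE: "smooth2_on U E0" and sF: "smooth2_on U F0" and sG: "smooth2_on U G0"
    using psd unfolding psd_metric_def by auto
  have e: "smooth2_on V (\<lambda>y. E0 (phi y))" "smooth2_on V (\<lambda>y. F0 (phi y))" "smooth2_on V (\<lambda>y. G0 (phi y))"
    using smooth2_comp_phi[OF V U sub sm] sE sF sG by auto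
  have p: "smooth2_on V (\<lambda>y. fst (phi y))" "smooth2_on V (\<lambda>y. snd (phi y))"
    using sm smoothV_fst smoothV_snd by auto
  have d: "smooth2_on V (Du (\<lambda>y. fst (phi y)))" "smooth2_on V (Du (\<lambda>y. snd (phi y)))"
          "smooth2_on V (Dv (\<lambda>y. fst (phi y)))" "smooth2_on V (Dv (\<lambda>y. snd (phi y)))"
    using p smooth2_Du smooth2_Dv by auto
  note ops = smooth2_add[OF V] smooth2_mult[OF V]
  have "smooth2_on V (\<lambda>x. E0 (phi x) * Du (\<lambda>y. fst (phi y)) x * Du (\<lambda>y. fst (phi y)) x
   + F0 (phi x) * (Du (\<lambda>y. fst (phi y)) x * Du (\<lambda>y. snd (phi y)) x + Du (\<lambda>y. snd (phi y)) x * Du (\<lambda>y. fst (phi y)) x)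
   + G0 (phi x) * Du (\<lambda>y. snd (phi y)) x * Du (\<lambda>y. snd (phi y)) x)"
    by (intro ops e d)
  thus "smooth2_on V (cE E0 F0 G0 phi)" by (simp only: cE_eq[abs_def])
  have "smooth2_on V (\<lambda>x. E0 (phi x) * Du (\<lambda>y. fst (phi y)) x * Dv (\<lambda>y. fst (phi y)) x
   + F0 (phi x) * (Du (\<lambda>y. fst (phi y)) x * Dv (\<lambda>y. snd (phi y)) x + Du (\<lambda>y. snd (phi y)) x * Dv (\<lambda>y. fst (phi y)) x)
   + G0 (phi x) * Du (\<lambda>y. snd (phi y)) x * Dv (\<lambda>y. snd (phi y)) x)"
    by (intro ops e d)
  thus "smooth2_on V (cF E0 F0 G0 phi)" by (simp only: cF_eq[abs_def])
  have "smooth2_on V (\<lambda>x. E0 (phi x) * Dv (\<lambda>y. fst (phi y)) x * Dv (\<lambda>y. fst (phi y)) x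
   + F0 (phi x) * (Dv (\<lambda>y. fst (phi y)) x * Dv (\<lambda>y. snd (phi y)) x + Dv (\<lambda>y. snd (phi y)) x * Dv (\<lambda>y. fst (phi y)) x)
   + G0 (phi x) * Dv (\<lambda>y. snd (phi y)) x * Dv (\<lambda>y. snd (phi y)) x)"
    by (intro ops e d)
  thus "smooth2_on V (cG E0 F0 G0 phi)" by (simp only: cG_eq[abs_def])
qed

lemma null_coeffs:
  assumes "DvV phi q \<in> null_space E0 F0 G0 (phi q)"
  shows "cF E0 F0 G0 phi q = 0" "cG E0 F0 G0 phi q = 0"
proof -
  have h: "\<And>w. ip E0 F0 G0 (phi q) (DvV phi q) w = 0" using assms unfolding null_space_def by blast
  show "cF E0 F0 G0 phi q = 0" unfolding cF_def using h[of "DuV phi q"] ip_sym[of E0 F0 G0 "phi q" "DuV phi q" "DvV phi q"] by simp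
  show "cG E0 F0 G0 phi q = 0" unfolding cG_def using h[of "DvV phi q"] by simp
qed

lemma psd_coeffs:
  assumes "psd_metric U E0 F0 G0" "phi q \<in> U"
  shows "cE E0 F0 G0 phi q \<ge> 0" "cG E0 F0 G0 phi q \<ge> 0"
proof -
  have h: "\<And>a. ip E0 F0 G0 (phi q) a a \<ge> 0" using assms unfolding psd_metric_def by blast
  show "cE E0 F0 G0 phi q \<ge> 0" unfolding cE_def by (rule h)
  show "cG E0 F0 G0 phi q \<ge> 0" unfolding cG_def by (rule h)
qed

lemma Du_axis_zero:
  assumes "open V" "q \<in> V" "snd q = 0" "\<And>y. y \<in> V \<Longrightarrow> snd y = 0 \<Longrightarrow> f y = 0"
  shows "Du f q = 0"
proof -
  have "eventually (\<lambda>t. (t, snd q) \<in> V) (nhds (fst q))" by (rule eventually_line_u[OF assms(1,2)])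
  hence ev: "eventually (\<lambda>t. f (t, snd q) = (\<lambda>t. 0) t) (nhds (fst q))"
    by (rule eventually_mono) (use assms(3,4) in auto)
  have "Du f q = deriv (\<lambda>t. 0) (fst q)" unfolding Du_def by (rule deriv_cong_ev[OF ev refl])
  thus ?thesis by simp
qed

lemma Dv_min_zero:
  assumes "open V" "q \<in> V" "f differentiable (at q)" "\<And>y. y \<in> V \<Longrightarrow> f q \<le> f y"
  shows "Dv f q = 0"
proof -
  have D: "((\<lambda>t. f (fst q, t)) has_real_derivative Dv f q) (at (snd q))" by (rule Dv_DERIV'[OF assms(3)])
  obtain e where e: "e > 0" "ball q e \<subseteq> V" using assms(1,2) open_contains_ball by blast
  show ?thesis
  proof (rule DERIV_local_min[OF D e(1)], intro allI impI)
    fix y assume "\<bar>snd q - y\<bar> < e"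
    hence "dist (fst q, y) q < e" by (cases q) (simp add: dist_Pair_Pair dist_real_def abs_minus_commute)
    hence "(fst q, y) \<in> V" using e by (auto simp: dist_commute)
    thus "f (fst q, snd q) \<le> f (fst q, y)" using assms(4) by simp
  qed
qed

lemma DERIV_local:
  fixes f g :: "real \<Rightarrow> real"
  assumes "open I" "t0 \<in> I" "\<And>t. t \<in> I \<Longrightarrow> f t = g t" "(g has_real_derivative D) (at t0)"
  shows "(f has_real_derivative D) (at t0)"
  by (rule has_field_derivative_transform_within_open[OF assms(4) assms(1,2)]) (simp add: assms(3))

lemma DERIV_eq_on:
  fixes f g :: "real \<Rightarrow> real"
  assumes "open I" "t0 \<in> I" "\<And>t. t \<in> I \<Longrightarrow> f t = g t" "(f has_real_derivative A) (at t0)" "(g has_real_derivative B) (at t0)"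
  shows "A = B"
  using DERIV_unique[OF DERIV_local[OF assms(1,2,3,5)] assms(4)] by simp

lemma open_vline: "open V \<Longrightarrow> open {t. (s, t) \<in> (V :: pt set)}"
proof -
  assume "open V"
  have "continuous_on UNIV (\<lambda>t::real. (s, t))" by (intro continuous_intros)
  hence "open ((\<lambda>t::real. (s, t)) -` V)" using \<open>open V\<close> by (simp add: open_vimage)
  thus ?thesis by (simp add: vimage_def)
qed

lemma open_hline: "open V \<Longrightarrow> open {s. (s, t) \<in> (V :: pt set)}"
proof -
  assume "open V"
  have "continuous_on UNIV (\<lambda>s::real. (s, t))" by (intro continuous_intros)
  hence "open ((\<lambda>s::real. (s, t)) -` V)" using \<open>open V\<close> by (simp add: open_vimage)
  thus ?thesis by (simp add: vimage_def)
qed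


lemma lam1D:
  fixes l e g f l' e' g' f' :: "real \<Rightarrow> real"
  assumes I: "open I" "t0 \<in> I"
    and eq: "\<And>t. t \<in> I \<Longrightarrow> (l t)\<^sup>2 = e t * g t - (f t)\<^sup>2"
    and dl: "\<And>t. t \<in> I \<Longrightarrow> (l has_real_derivative l' t) (at t)"
    and de: "\<And>t. t \<in> I \<Longrightarrow> (e has_real_derivative e' t) (at t)"
    and dg: "\<And>t. t \<in> I \<Longrightarrow> (g has_real_derivative g' t) (at t)"
    and df: "\<And>t. t \<in> I \<Longrightarrow> (f has_real_derivative f' t) (at t)"
    and d2: "(l' has_real_derivative l2) (at t0)" "(e' has_real_derivative e2) (at t0)"
            "(g' has_real_derivative g2) (at t0)" "(f' has_real_derivative f2) (at t0)"
    and z: "f t0 = 0" "g t0 = 0" "g' t0 = 0"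
  shows "2 * (l' t0)\<^sup>2 = e t0 * g2 - 2 * (f' t0)\<^sup>2"
proof -
  have h: "2 * l t * l' t = e' t * g t + e t * g' t - 2 * f t * f' t" if t: "t \<in> I" for t
  proof (rule DERIV_eq_on[OF I(1) t])
    show "\<And>t. t \<in> I \<Longrightarrow> (l t)\<^sup>2 = e t * g t - (f t)\<^sup>2" by (rule eq)
    show "((\<lambda>t. (l t)\<^sup>2) has_real_derivative 2 * l t * l' t) (at t)"
      using dl[OF t] by (auto intro!: derivative_eq_intros)
    show "((\<lambda>t. e t * g t - (f t)\<^sup>2) has_real_derivative e' t * g t + e t * g' t - 2 * f t * f' t) (at t)"
      using de[OF t] dg[OF t] df[OF t] by (auto intro!: derivative_eq_intros simp: algebra_simps)
  qed
  have l0: "l t0 = 0" using eq[OF I(2)] z by simp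
  have "2 * (l' t0 * l' t0 + l t0 * l2) = e2 * g t0 + e' t0 * g' t0 + (e' t0 * g' t0 + e t0 * g2) - 2 * (f' t0 * f' t0 + f t0 * f2)"
  proof (rule DERIV_eq_on[OF I h])
    show "((\<lambda>t. 2 * l t * l' t) has_real_derivative 2 * (l' t0 * l' t0 + l t0 * l2)) (at t0)"
      using dl[OF I(2)] d2(1) by (auto intro!: derivative_eq_intros simp: algebra_simps)
    show "((\<lambda>t. e' t * g t + e t * g' t - 2 * f t * f' t) has_real_derivative
       e2 * g t0 + e' t0 * g' t0 + (e' t0 * g' t0 + e t0 * g2) - 2 * (f' t0 * f' t0 + f t0 * f2)) (at t0)"
      using de[OF I(2)] dg[OF I(2)] df[OF I(2)] d2 by (auto intro!: derivative_eq_intros simp: algebra_simps)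
  qed
  thus ?thesis using z l0 by (simp add: power2_eq_square)
qed


lemma vline_DERIV:
  assumes "smooth2_on V f" "(s, t) \<in> V"
  shows "((\<lambda>t. f (s, t)) has_real_derivative Dv f (s, t)) (at t)"
  using Dv_DERIV[OF smooth2_diff[OF assms]] .

lemma hline_DERIV:
  assumes "smooth2_on V f" "(s, t) \<in> V"
  shows "((\<lambda>s. f (s, t)) has_real_derivative Du f (s, t)) (at s)"
  using Du_DERIV[OF smooth2_diff[OF assms]] .

lemma chart_lam:
  assumes V: "open V" and sE: "smooth2_on V E" and sF: "smooth2_on V F" and sG: "smooth2_on V G"
    and sl: "smooth2_on V lam" and eq: "\<And>y. y \<in> V \<Longrightarrow> E y * G y - (F y)\<^sup>2 = (lam y)\<^sup>2"
    and q: "q \<in> V" and z: "F q = 0" "G q = 0" "Dv G q = 0"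
  shows "2 * (Dv lam q)\<^sup>2 = E q * Dv (Dv G) q - 2 * (Dv F q)\<^sup>2"
proof -
  obtain s t0 where qe: "q = (s, t0)" by (cases q)
  define I where "I = {t. (s, t) \<in> V}"
  have I: "open I" "t0 \<in> I" using open_vline[OF V] q qe by (auto simp: I_def)
  have "2 * (Dv lam (s, t0))\<^sup>2 = E (s, t0) * Dv (Dv G) (s, t0) - 2 * (Dv F (s, t0))\<^sup>2"
  proof (rule lam1D[OF I, where l="\<lambda>t. lam (s, t)" and e="\<lambda>t. E (s, t)" and g="\<lambda>t. G (s, t)" and f="\<lambda>t. F (s, t)"
        and l'="\<lambda>t. Dv lam (s, t)" and e'="\<lambda>t. Dv E (s, t)" and g'="\<lambda>t. Dv G (s, t)" and f'="\<lambda>t. Dv F (s, t)"])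
    fix t assume t: "t \<in> I"
    hence st: "(s, t) \<in> V" by (simp add: I_def)
    show "(lam (s, t))\<^sup>2 = E (s, t) * G (s, t) - (F (s, t))\<^sup>2" using eq[OF st] by simp
    show "((\<lambda>t. lam (s, t)) has_real_derivative Dv lam (s, t)) (at t)" by (rule vline_DERIV[OF sl st])
    show "((\<lambda>t. E (s, t)) has_real_derivative Dv E (s, t)) (at t)" by (rule vline_DERIV[OF sE st])
    show "((\<lambda>t. G (s, t)) has_real_derivative Dv G (s, t)) (at t)" by (rule vline_DERIV[OF sG st])
    show "((\<lambda>t. F (s, t)) has_real_derivative Dv F (s, t)) (at t)" by (rule vline_DERIV[OF sF st])
  next
    have st: "(s, t0) \<in> V" using q qe by simp
    show "((\<lambda>t. Dv lam (s, t)) has_real_derivative Dv (Dv lam) (s, t0)) (at t0)" by (rule vline_DERIV[OF smooth2_Dv[OF sl] st])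
    show "((\<lambda>t. Dv E (s, t)) has_real_derivative Dv (Dv E) (s, t0)) (at t0)" by (rule vline_DERIV[OF smooth2_Dv[OF sE] st])
    show "((\<lambda>t. Dv G (s, t)) has_real_derivative Dv (Dv G) (s, t0)) (at t0)" by (rule vline_DERIV[OF smooth2_Dv[OF sG] st])
    show "((\<lambda>t. Dv F (s, t)) has_real_derivative Dv (Dv F) (s, t0)) (at t0)" by (rule vline_DERIV[OF smooth2_Dv[OF sF] st])
  qed (use z qe in auto)
  thus ?thesis using qe by simp
qed


locale sa_chart =
  fixes U :: "pt set" and E0 F0 G0 :: "pt \<Rightarrow> real" and V :: "pt set" and phi :: "pt \<Rightarrow> pt" and lam :: "pt \<Rightarrow> real"
  assumes psd: "psd_metric U E0 F0 G0"
    and cs: "coord_system U V phi"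
    and sing: "\<And>q. q \<in> V \<Longrightarrow> singular_pt U E0 F0 G0 (phi q) \<longleftrightarrow> snd q = 0"
    and nul: "\<And>q. q \<in> V \<Longrightarrow> snd q = 0 \<Longrightarrow> DvV phi q \<in> null_space E0 F0 G0 (phi q)"
    and gl: "good_lambda E0 F0 G0 V phi lam"
begin

abbreviation "EE \<equiv> cE E0 F0 G0 phi"
abbreviation "FF \<equiv> cF E0 F0 G0 phi"
abbreviation "GG \<equiv> cG E0 F0 G0 phi"

lemma Vopen: "open V" using cs unfolding coord_system_def by blast
lemma Vsub: "phi ` V \<subseteq> U" using cs unfolding coord_system_def by blast
lemma smV: "smoothV_on V phi" using cs unfolding coord_system_def by blast
lemma Uopen: "open U" using psd unfolding psd_metric_def by blast

lemma sEFG: "smooth2_on V EE" "smooth2_on V FF" "smooth2_on V GG"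
  using smooth_coeffs[OF psd Vopen Vsub smV] by auto

lemma slam: "smooth2_on V lam" using gl unfolding good_lambda_def by blast
lemma lam_eq: "\<And>y. y \<in> V \<Longrightarrow> EE y * GG y - (FF y)\<^sup>2 = (lam y)\<^sup>2" using gl unfolding good_lambda_def by blast
lemma lamv_pos: "\<And>q. q \<in> V \<Longrightarrow> snd q = 0 \<Longrightarrow> Dv lam q > 0" using gl unfolding good_lambda_def by blast

lemma axis_FG: "q \<in> V \<Longrightarrow> snd q = 0 \<Longrightarrow> FF q = 0 \<and> GG q = 0"
  using null_coeffs[OF nul] by blast

lemma EG_nonneg: "q \<in> V \<Longrightarrow> EE q \<ge> 0 \<and> GG q \<ge> 0"
  using psd_coeffs[OF psd] Vsub by blast

lemma DvG_axis: assumes "q \<in> V" "snd q = 0" shows "Dv GG q = 0"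
proof (rule Dv_min_zero[OF Vopen assms(1) smooth2_diff[OF sEFG(3) assms(1)]])
  fix y assume "y \<in> V" thus "GG q \<le> GG y" using axis_FG[OF assms] EG_nonneg by simp
qed

lemma DuF_axis: "q \<in> V \<Longrightarrow> snd q = 0 \<Longrightarrow> Du FF q = 0"
  by (rule Du_axis_zero[OF Vopen]) (use axis_FG in auto)
lemma DuG_axis: "q \<in> V \<Longrightarrow> snd q = 0 \<Longrightarrow> Du GG q = 0"
  by (rule Du_axis_zero[OF Vopen]) (use axis_FG in auto)

lemma lam_formula: assumes "q \<in> V" "snd q = 0"
  shows "2 * (Dv lam q)\<^sup>2 = EE q * Dv (Dv GG) q - 2 * (Dv FF q)\<^sup>2"
  by (rule chart_lam[OF Vopen sEFG slam lam_eq assms(1)]) (use axis_FG[OF assms] DvG_axis[OF assms] in auto)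

lemma E_pos: assumes "q \<in> V" "snd q = 0" shows "EE q > 0"
proof (rule ccontr)
  assume "\<not> EE q > 0"
  hence "EE q = 0" using EG_nonneg[OF assms(1)] by simp
  hence "2 * (Dv lam q)\<^sup>2 \<le> 0" using lam_formula[OF assms] by simp
  moreover have "(Dv lam q)\<^sup>2 > 0" using lamv_pos[OF assms] by simp
  ultimately show False by simp
qed

lemma lamv_sqrt: assumes "q \<in> V" "snd q = 0"
  shows "Dv lam q = sqrt ((EE q * Dv (Dv GG) q - 2 * (Dv FF q)\<^sup>2) / 2)"
proof -
  have "(Dv lam q)\<^sup>2 = (EE q * Dv (Dv GG) q - 2 * (Dv FF q)\<^sup>2) / 2" using lam_formula[OF assms] by simp
  hence "sqrt ((EE q * Dv (Dv GG) q - 2 * (Dv FF q)\<^sup>2) / 2) = sqrt ((Dv lam q)\<^sup>2)" by (simp only:)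
  also have "\<dots> = Dv lam q" using lamv_pos[OF assms] by simp
  finally show ?thesis by simp
qed

end


definition dgm :: "(pt \<Rightarrow> real) \<Rightarrow> (pt \<Rightarrow> real) \<Rightarrow> (pt \<Rightarrow> real) \<Rightarrow> pt \<Rightarrow> pt \<Rightarrow> pt \<Rightarrow> pt \<Rightarrow> real" where
  "dgm E0 F0 G0 p A B C =
     fst A * (Du E0 p * fst B * fst C + Du F0 p * (fst B * snd C + snd B * fst C) + Du G0 p * snd B * snd C)
   + snd A * (Dv E0 p * fst B * fst C + Dv F0 p * (fst B * snd C + snd B * fst C) + Dv G0 p * snd B * snd C)"

lemma Du_ipf_const:
  assumes "E0 differentiable (at p)" "F0 differentiable (at p)" "G0 differentiable (at p)"
  shows "Du (ipf E0 F0 G0 (\<lambda>_. B) (\<lambda>_. C)) p =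
     Du E0 p * fst B * fst C + Du F0 p * (fst B * snd C + snd B * fst C) + Du G0 p * snd B * snd C"
proof (rule Du_eqI)
  have e: "ipf E0 F0 G0 (\<lambda>_. B) (\<lambda>_. C) = (\<lambda>x. E0 x * (fst B * fst C) + F0 x * (fst B * snd C + snd B * fst C) + G0 x * (snd B * snd C))"
    unfolding ipf_def ip_def by (auto simp: algebra_simps)
  show "((\<lambda>t. ipf E0 F0 G0 (\<lambda>_. B) (\<lambda>_. C) (t, snd p)) has_real_derivative
     Du E0 p * fst B * fst C + Du F0 p * (fst B * snd C + snd B * fst C) + Du G0 p * snd B * snd C) (at (fst p))"
    unfolding e using Du_DERIV'[OF assms(1)] Du_DERIV'[OF assms(2)] Du_DERIV'[OF assms(3)]
    by (auto intro!: derivative_eq_intros simp: algebra_simps)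
qed

lemma Dv_ipf_const:
  assumes "E0 differentiable (at p)" "F0 differentiable (at p)" "G0 differentiable (at p)"
  shows "Dv (ipf E0 F0 G0 (\<lambda>_. B) (\<lambda>_. C)) p =
     Dv E0 p * fst B * fst C + Dv F0 p * (fst B * snd C + snd B * fst C) + Dv G0 p * snd B * snd C"
proof (rule Dv_eqI)
  have e: "ipf E0 F0 G0 (\<lambda>_. B) (\<lambda>_. C) = (\<lambda>x. E0 x * (fst B * fst C) + F0 x * (fst B * snd C + snd B * fst C) + G0 x * (snd B * snd C))"
    unfolding ipf_def ip_def by (auto simp: algebra_simps)
  show "((\<lambda>t. ipf E0 F0 G0 (\<lambda>_. B) (\<lambda>_. C) (fst p, t)) has_real_derivative
     Dv E0 p * fst B * fst C + Dv F0 p * (fst B * snd C + snd B * fst C) + Dv G0 p * snd B * snd C) (at (snd p))"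
    unfolding e using Dv_DERIV'[OF assms(1)] Dv_DERIV'[OF assms(2)] Dv_DERIV'[OF assms(3)]
    by (auto intro!: derivative_eq_intros simp: algebra_simps)
qed

lemma Gamma_const:
  assumes "E0 differentiable (at p)" "F0 differentiable (at p)" "G0 differentiable (at p)"
  shows "kossowski_Gamma E0 F0 G0 (\<lambda>_. X) (\<lambda>_. Y) (\<lambda>_. Z) p =
     (1/2) * (dgm E0 F0 G0 p X Y Z + dgm E0 F0 G0 p Y X Z - dgm E0 F0 G0 p Z X Y)"
proof -
  have lie0: "\<And>A B. lie (\<lambda>_. A) (\<lambda>_. B) p = (0, 0)" unfolding lie_def vf_app_def by simp
  have ip0: "\<And>w. ip E0 F0 G0 p (0, 0) w = 0" unfolding ip_def by simp
  have vf: "\<And>A B C. vf_app (\<lambda>_. A) (ipf E0 F0 G0 (\<lambda>_. B) (\<lambda>_. C)) p = dgm E0 F0 G0 p A B C"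
    unfolding vf_app_def dgm_def using Du_ipf_const[OF assms] Dv_ipf_const[OF assms] by simp
  show ?thesis unfolding kossowski_Gamma_def lie0 ip0 vf by simp
qed

lemma smoothV_const: "smoothV_on U (\<lambda>_. X)"
  unfolding smoothV_on_def by (simp add: smooth2_const)


lemma comp_vline_DERIV:
  assumes "g differentiable (at (phi q))" "smoothV_on V phi" "q \<in> V"
  shows "((\<lambda>t. g (phi (fst q, t))) has_real_derivative
     Du g (phi q) * Dv (\<lambda>y. fst (phi y)) q + Dv g (phi q) * Dv (\<lambda>y. snd (phi y)) q) (at (snd q))"
proof -
  have d1: "(\<lambda>y. fst (phi y)) differentiable (at q)" "(\<lambda>y. snd (phi y)) differentiable (at q)"
    using smooth2_diff[OF smoothV_fst[OF assms(2)] assms(3)] smooth2_diff[OF smoothV_snd[OF assms(2)] assms(3)] by auto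
  have g: "g differentiable (at (fst (phi (fst q, snd q)), snd (phi (fst q, snd q))))" using assms(1) by simp
  have "((\<lambda>t. g (fst (phi (fst q, t)), snd (phi (fst q, t)))) has_real_derivative
     Du g (fst (phi (fst q, snd q)), snd (phi (fst q, snd q))) * Dv (\<lambda>y. fst (phi y)) q
     + Dv g (fst (phi (fst q, snd q)), snd (phi (fst q, snd q))) * Dv (\<lambda>y. snd (phi y)) q) (at (snd q))"
    by (rule DERIV_comp2[OF g Dv_DERIV'[OF d1(1)] Dv_DERIV'[OF d1(2)]])
  thus ?thesis by simp
qed

lemma comp_hline_DERIV:
  assumes "g differentiable (at (phi q))" "smoothV_on V phi" "q \<in> V"
  shows "((\<lambda>t. g (phi (t, snd q))) has_real_derivative
     Du g (phi q) * Du (\<lambda>y. fst (phi y)) q + Dv g (phi q) * Du (\<lambda>y. snd (phi y)) q) (at (fst q))"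
proof -
  have d1: "(\<lambda>y. fst (phi y)) differentiable (at q)" "(\<lambda>y. snd (phi y)) differentiable (at q)"
    using smooth2_diff[OF smoothV_fst[OF assms(2)] assms(3)] smooth2_diff[OF smoothV_snd[OF assms(2)] assms(3)] by auto
  have g: "g differentiable (at (fst (phi (fst q, snd q)), snd (phi (fst q, snd q))))" using assms(1) by simp
  have "((\<lambda>t. g (fst (phi (t, snd q)), snd (phi (t, snd q)))) has_real_derivative
     Du g (fst (phi (fst q, snd q)), snd (phi (fst q, snd q))) * Du (\<lambda>y. fst (phi y)) q
     + Dv g (fst (phi (fst q, snd q)), snd (phi (fst q, snd q))) * Du (\<lambda>y. snd (phi y)) q) (at (fst q))"
    by (rule DERIV_comp2[OF g Du_DERIV'[OF d1(1)] Du_DERIV'[OF d1(2)]])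
  thus ?thesis by simp
qed

lemma Dv_cE:
  assumes "E0 differentiable (at (phi q))" "F0 differentiable (at (phi q))" "G0 differentiable (at (phi q))"
    and sm: "smoothV_on V phi" and q: "q \<in> V"
  shows "Dv (cE E0 F0 G0 phi) q = dgm E0 F0 G0 (phi q) (DvV phi q) (DuV phi q) (DuV phi q)
     + 2 * ip E0 F0 G0 (phi q) (DuV phi q) (Dv (Du (\<lambda>y. fst (phi y))) q, Dv (Du (\<lambda>y. snd (phi y))) q)"
proof (rule Dv_eqI)
  define P1 where "P1 = (\<lambda>y. fst (phi y))"
  define P2 where "P2 = (\<lambda>y. snd (phi y))"
  have s1: "smooth2_on V P1" "smooth2_on V P2" unfolding P1_def P2_def using sm smoothV_fst smoothV_snd by auto
  have du: "Du P1 differentiable (at q)" "Du P2 differentiable (at q)"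
    using smooth2_diff[OF smooth2_Du[OF s1(1)] q] smooth2_diff[OF smooth2_Du[OF s1(2)] q] by auto
  have e: "\<And>t. cE E0 F0 G0 phi (fst q, t) = E0 (phi (fst q, t)) * Du P1 (fst q, t) * Du P1 (fst q, t)
   + F0 (phi (fst q, t)) * (Du P1 (fst q, t) * Du P2 (fst q, t) + Du P2 (fst q, t) * Du P1 (fst q, t))
   + G0 (phi (fst q, t)) * Du P2 (fst q, t) * Du P2 (fst q, t)"
    unfolding P1_def P2_def by (rule cE_eq)
  note h = comp_vline_DERIV[OF assms(1) sm q] comp_vline_DERIV[OF assms(2) sm q] comp_vline_DERIV[OF assms(3) sm q]
      Dv_DERIV'[OF du(1)] Dv_DERIV'[OF du(2)]
  show "((\<lambda>t. cE E0 F0 G0 phi (fst q, t)) has_real_derivative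
     dgm E0 F0 G0 (phi q) (DvV phi q) (DuV phi q) (DuV phi q)
     + 2 * ip E0 F0 G0 (phi q) (DuV phi q) (Dv (Du (\<lambda>y. fst (phi y))) q, Dv (Du (\<lambda>y. snd (phi y))) q)) (at (snd q))"
    unfolding e using h unfolding P1_def[symmetric] P2_def[symmetric]
    by (auto intro!: derivative_eq_intros simp: dgm_def ip_def DuV_def DvV_def P1_def P2_def algebra_simps)
qed

lemma Du_cF:
  assumes "E0 differentiable (at (phi q))" "F0 differentiable (at (phi q))" "G0 differentiable (at (phi q))"
    and sm: "smoothV_on V phi" and q: "q \<in> V"
  shows "Du (cF E0 F0 G0 phi) q = dgm E0 F0 G0 (phi q) (DuV phi q) (DuV phi q) (DvV phi q)
     + ip E0 F0 G0 (phi q) (Du (Du (\<lambda>y. fst (phi y))) q, Du (Du (\<lambda>y. snd (phi y))) q) (DvV phi q)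
     + ip E0 F0 G0 (phi q) (DuV phi q) (Du (Dv (\<lambda>y. fst (phi y))) q, Du (Dv (\<lambda>y. snd (phi y))) q)"
proof (rule Du_eqI)
  define P1 where "P1 = (\<lambda>y. fst (phi y))"
  define P2 where "P2 = (\<lambda>y. snd (phi y))"
  have s1: "smooth2_on V P1" "smooth2_on V P2" unfolding P1_def P2_def using sm smoothV_fst smoothV_snd by auto
  have du: "Du P1 differentiable (at q)" "Du P2 differentiable (at q)" "Dv P1 differentiable (at q)" "Dv P2 differentiable (at q)"
    using smooth2_diff[OF smooth2_Du[OF s1(1)] q] smooth2_diff[OF smooth2_Du[OF s1(2)] q]
      smooth2_diff[OF smooth2_Dv[OF s1(1)] q] smooth2_diff[OF smooth2_Dv[OF s1(2)] q] by auto
  have e: "\<And>t. cF E0 F0 G0 phi (t, snd q) = E0 (phi (t, snd q)) * Du P1 (t, snd q) * Dv P1 (t, snd q)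
   + F0 (phi (t, snd q)) * (Du P1 (t, snd q) * Dv P2 (t, snd q) + Du P2 (t, snd q) * Dv P1 (t, snd q))
   + G0 (phi (t, snd q)) * Du P2 (t, snd q) * Dv P2 (t, snd q)"
    unfolding P1_def P2_def by (rule cF_eq)
  note h = comp_hline_DERIV[OF assms(1) sm q] comp_hline_DERIV[OF assms(2) sm q] comp_hline_DERIV[OF assms(3) sm q]
      Du_DERIV'[OF du(1)] Du_DERIV'[OF du(2)] Du_DERIV'[OF du(3)] Du_DERIV'[OF du(4)]
  show "((\<lambda>t. cF E0 F0 G0 phi (t, snd q)) has_real_derivative
     dgm E0 F0 G0 (phi q) (DuV phi q) (DuV phi q) (DvV phi q)
     + ip E0 F0 G0 (phi q) (Du (Du (\<lambda>y. fst (phi y))) q, Du (Du (\<lambda>y. snd (phi y))) q) (DvV phi q)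
     + ip E0 F0 G0 (phi q) (DuV phi q) (Du (Dv (\<lambda>y. fst (phi y))) q, Du (Dv (\<lambda>y. snd (phi y))) q)) (at (fst q))"
    unfolding e using h unfolding P1_def[symmetric] P2_def[symmetric]
    by (auto intro!: derivative_eq_intros simp: dgm_def ip_def DuV_def DvV_def P1_def P2_def algebra_simps)
qed


locale sa_chart_adm = sa_chart +
  assumes adm: "admissible U E0 F0 G0"
begin

lemma DvE_axis:
  assumes q: "q \<in> V" "snd q = 0"
  shows "Dv EE q = 0"
proof -
  define X where "X = DuV phi q"
  define Z where "Z = DvV phi q"
  define P1 where "P1 = (\<lambda>y. fst (phi y))"
  define P2 where "P2 = (\<lambda>y. snd (phi y))"
  have pU: "phi q \<in> U" using Vsub q by auto
  have dif: "E0 differentiable (at (phi q))" "F0 differentiable (at (phi q))" "G0 differentiable (at (phi q))"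
    using psd pU unfolding psd_metric_def by (auto intro: smooth2_diff)
  have sp: "singular_pt U E0 F0 G0 (phi q)" using sing q by simp
  have zn: "Z \<in> null_space E0 F0 G0 (phi q)" unfolding Z_def by (rule nul[OF q])
  have "kossowski_Gamma E0 F0 G0 (\<lambda>_. X) (\<lambda>_. X) (\<lambda>_. Z) (phi q) = 0"
    using adm sp zn smoothV_const unfolding admissible_def by blast
  hence g: "2 * dgm E0 F0 G0 (phi q) X X Z - dgm E0 F0 G0 (phi q) Z X X = 0"
    using Gamma_const[OF dif, of X X Z] by simp
  have s1: "smooth2_on V P1" "smooth2_on V P2" unfolding P1_def P2_def using smV smoothV_fst smoothV_snd by auto
  have sw: "Du (Dv P1) q = Dv (Du P1) q" "Du (Dv P2) q = Dv (Du P2) q"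
    using schwarz[OF Vopen s1(1) q(1)] schwarz[OF Vopen s1(2) q(1)] by auto
  have "Du FF q = dgm E0 F0 G0 (phi q) X X Z
     + ip E0 F0 G0 (phi q) (Du (Du P1) q, Du (Du P2) q) Z
     + ip E0 F0 G0 (phi q) X (Dv (Du P1) q, Dv (Du P2) q)"
    using Du_cF[OF dif smV q(1)] unfolding X_def Z_def P1_def P2_def sw[unfolded P1_def P2_def] by simp
  moreover have "ip E0 F0 G0 (phi q) (Du (Du P1) q, Du (Du P2) q) Z = 0"
    using zn ip_sym[of E0 F0 G0 "phi q" "(Du (Du P1) q, Du (Du P2) q)" Z] unfolding null_space_def by simp
  moreover have "Du FF q = 0" by (rule DuF_axis[OF q])
  ultimately have f: "dgm E0 F0 G0 (phi q) X X Z + ip E0 F0 G0 (phi q) X (Dv (Du P1) q, Dv (Du P2) q) = 0" by simp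
  have "Dv EE q = dgm E0 F0 G0 (phi q) Z X X + 2 * ip E0 F0 G0 (phi q) X (Dv (Du P1) q, Dv (Du P2) q)"
    using Dv_cE[OF dif smV q(1)] unfolding X_def Z_def P1_def P2_def by simp
  thus ?thesis using f g by simp
qed

end


locale trans =
  fixes N V2 :: "pt set" and a b E2 F2 G2 E1 F1 G1 :: "pt \<Rightarrow> real" and s0 :: real
  assumes N: "open N" and V2: "open V2"
    and sa: "smooth2_on N a" and sb: "smooth2_on N b"
    and into: "\<And>x. x \<in> N \<Longrightarrow> (a x, b x) \<in> V2"
    and sE2: "smooth2_on V2 E2" and sF2: "smooth2_on V2 F2" and sG2: "smooth2_on V2 G2"
    and q1: "(s0, 0) \<in> N"
    and b_axis: "\<And>x. x \<in> N \<Longrightarrow> snd x = 0 \<Longrightarrow> b x = 0"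
    and at_axis: "\<And>x. x \<in> N \<Longrightarrow> snd x = 0 \<Longrightarrow> Dv a x = 0"
    and FG_axis: "\<And>y. y \<in> V2 \<Longrightarrow> snd y = 0 \<Longrightarrow> F2 y = 0 \<and> G2 y = 0"
    and E2v: "Dv E2 (a (s0, 0), b (s0, 0)) = 0" and G2v: "Dv G2 (a (s0, 0), b (s0, 0)) = 0"
    and E1: "\<And>x. x \<in> N \<Longrightarrow> E1 x = E2 (a x, b x) * (Du a x)\<^sup>2 + 2 * F2 (a x, b x) * Du a x * Du b x + G2 (a x, b x) * (Du b x)\<^sup>2"
    and F1: "\<And>x. x \<in> N \<Longrightarrow> F1 x = E2 (a x, b x) * Du a x * Dv a x + F2 (a x, b x) * (Du a x * Dv b x + Dv a x * Du b x) + G2 (a x, b x) * Du b x * Dv b x"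
    and G1: "\<And>x. x \<in> N \<Longrightarrow> G1 x = E2 (a x, b x) * (Dv a x)\<^sup>2 + 2 * F2 (a x, b x) * Dv a x * Dv b x + G2 (a x, b x) * (Dv b x)\<^sup>2"
begin

definition "q1 = (s0, 0::real)"
definition "q2 = (a (s0, 0), b (s0, 0))"

lemma q1N: "q1 \<in> N" using q1 by (simp add: q1_def)

lemma vcomp:
  assumes g: "smooth2_on V2 g" and x: "(s, t) \<in> N"
  shows "((\<lambda>t. g (a (s, t), b (s, t))) has_real_derivative
          Du g (a (s, t), b (s, t)) * Dv a (s, t) + Dv g (a (s, t), b (s, t)) * Dv b (s, t)) (at t)"
  by (rule DERIV_comp2[OF smooth2_diff[OF g into[OF x]] vline_DERIV[OF sa x] vline_DERIV[OF sb x]])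

lemma hcomp:
  assumes g: "smooth2_on V2 g" and x: "(s, t) \<in> N"
  shows "((\<lambda>s. g (a (s, t), b (s, t))) has_real_derivative
          Du g (a (s, t), b (s, t)) * Du a (s, t) + Dv g (a (s, t), b (s, t)) * Du b (s, t)) (at s)"
  by (rule DERIV_comp2[OF smooth2_diff[OF g into[OF x]] hline_DERIV[OF sa x] hline_DERIV[OF sb x]])

lemma bu_axis: "x \<in> N \<Longrightarrow> snd x = 0 \<Longrightarrow> Du b x = 0"
  by (rule Du_axis_zero[OF N]) (use b_axis in auto)

lemma q2V: "q2 \<in> V2" using into[OF q1] by (simp add: q2_def)
lemma q2axis: "snd q2 = 0" using b_axis[OF q1] by (simp add: q2_def)

definition "J = {s. (s, 0) \<in> N}"
lemma J: "open J" "s0 \<in> J" using open_hline[OF N] q1 by (auto simp: J_def)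

lemma E1_q1: "E1 q1 = E2 q2 * (Du a q1)\<^sup>2"
proof -
  have "F2 q2 = 0" "G2 q2 = 0" using FG_axis[OF q2V q2axis] by auto
  thus ?thesis using E1[OF q1N] by (simp add: q1_def q2_def)
qed

lemma E1u_q1: "Du E1 q1 = Du E2 q2 * (Du a q1)^3 + 2 * E2 q2 * Du a q1 * Du (Du a) q1"
proof -
  have eq: "E1 (s, 0) = E2 (a (s, 0), b (s, 0)) * (Du a (s, 0))\<^sup>2" if "s \<in> J" for s
  proof -
    have x: "(s, 0) \<in> N" using that by (simp add: J_def)
    have "F2 (a (s, 0), b (s, 0)) = 0 \<and> G2 (a (s, 0), b (s, 0)) = 0"
      using FG_axis[OF into[OF x]] b_axis[OF x] by simp
    thus ?thesis using E1[OF x] by simp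
  qed
  have "((\<lambda>s. E2 (a (s, 0), b (s, 0)) * (Du a (s, 0))\<^sup>2) has_real_derivative
      (Du E2 q2 * Du a q1 + Dv E2 q2 * Du b q1) * (Du a q1)\<^sup>2 + E2 q2 * (2 * Du a q1 * Du (Du a) q1)) (at s0)"
    using hcomp[OF sE2 q1] hline_DERIV[OF smooth2_Du[OF sa] q1]
    by (auto intro!: derivative_eq_intros simp: q1_def q2_def)
  hence "((\<lambda>s. E1 (s, 0)) has_real_derivative
      (Du E2 q2 * Du a q1 + Dv E2 q2 * Du b q1) * (Du a q1)\<^sup>2 + E2 q2 * (2 * Du a q1 * Du (Du a) q1)) (at s0)"
    by (rule DERIV_local[OF J, rotated]) (use eq in auto)
  hence "Du E1 q1 = (Du E2 q2 * Du a q1 + Dv E2 q2 * Du b q1) * (Du a q1)\<^sup>2 + E2 q2 * (2 * Du a q1 * Du (Du a) q1)"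
    by (intro Du_eqI) (simp add: q1_def)
  moreover have "Du b q1 = 0" using bu_axis[OF q1N] by (simp add: q1_def)
  ultimately show ?thesis by (simp add: power2_eq_square power3_eq_cube algebra_simps)
qed

lemma F1v_axis:
  assumes sJ: "s \<in> J"
  shows "Dv F1 (s, 0) = E2 (a (s, 0), b (s, 0)) * Du a (s, 0) * Dv (Dv a) (s, 0)
           + Dv F2 (a (s, 0), b (s, 0)) * Du a (s, 0) * (Dv b (s, 0))\<^sup>2"
proof -
  have x: "(s, 0) \<in> N" using sJ by (simp add: J_def)
  define I where "I = {t. (s, t) \<in> N}"
  have I: "open I" "0 \<in> I" using open_vline[OF N] x by (auto simp: I_def)
  have z: "Dv a (s, 0) = 0" "Du b (s, 0) = 0" "F2 (a (s, 0), b (s, 0)) = 0" "G2 (a (s, 0), b (s, 0)) = 0"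
    using at_axis[OF x] bu_axis[OF x] FG_axis[OF into[OF x]] b_axis[OF x] by auto
  have "((\<lambda>t. E2 (a (s, t), b (s, t)) * Du a (s, t) * Dv a (s, t) + F2 (a (s, t), b (s, t)) * (Du a (s, t) * Dv b (s, t) + Dv a (s, t) * Du b (s, t)) + G2 (a (s, t), b (s, t)) * Du b (s, t) * Dv b (s, t))
     has_real_derivative E2 (a (s, 0), b (s, 0)) * Du a (s, 0) * Dv (Dv a) (s, 0)
           + Dv F2 (a (s, 0), b (s, 0)) * Du a (s, 0) * (Dv b (s, 0))\<^sup>2) (at 0)"
    using vcomp[OF sE2 x] vcomp[OF sF2 x] vcomp[OF sG2 x]
      vline_DERIV[OF smooth2_Du[OF sa] x] vline_DERIV[OF smooth2_Dv[OF sa] x]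
      vline_DERIV[OF smooth2_Du[OF sb] x] vline_DERIV[OF smooth2_Dv[OF sb] x]
    by (auto intro!: derivative_eq_intros simp: z power2_eq_square)
  hence "((\<lambda>t. F1 (s, t)) has_real_derivative E2 (a (s, 0), b (s, 0)) * Du a (s, 0) * Dv (Dv a) (s, 0)
           + Dv F2 (a (s, 0), b (s, 0)) * Du a (s, 0) * (Dv b (s, 0))\<^sup>2) (at 0)"
    by (rule DERIV_local[OF I, rotated]) (use F1 in \<open>auto simp: I_def\<close>)
  thus ?thesis by (intro Dv_eqI) simp
qed

lemma F1uv_q1: "Du (Dv F1) q1 = Du E2 q2 * (Du a q1)\<^sup>2 * Dv (Dv a) q1
   + E2 q2 * (Du (Du a) q1 * Dv (Dv a) q1 + Du a q1 * Du (Dv (Dv a)) q1)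
   + Du (Dv F2) q2 * (Du a q1)\<^sup>2 * (Dv b q1)\<^sup>2
   + Dv F2 q2 * (Du (Du a) q1 * (Dv b q1)\<^sup>2 + 2 * Du a q1 * Dv b q1 * Du (Dv b) q1)"
proof -
  have bu: "Du b (s0, 0) = 0" using bu_axis[OF q1] by simp
  have "((\<lambda>s. E2 (a (s, 0), b (s, 0)) * Du a (s, 0) * Dv (Dv a) (s, 0)
           + Dv F2 (a (s, 0), b (s, 0)) * Du a (s, 0) * (Dv b (s, 0))\<^sup>2) has_real_derivative
     Du E2 q2 * (Du a q1)\<^sup>2 * Dv (Dv a) q1
   + E2 q2 * (Du (Du a) q1 * Dv (Dv a) q1 + Du a q1 * Du (Dv (Dv a)) q1)
   + Du (Dv F2) q2 * (Du a q1)\<^sup>2 * (Dv b q1)\<^sup>2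
   + Dv F2 q2 * (Du (Du a) q1 * (Dv b q1)\<^sup>2 + 2 * Du a q1 * Dv b q1 * Du (Dv b) q1)) (at s0)"
    using hcomp[OF sE2 q1] hcomp[OF smooth2_Dv[OF sF2] q1]
      hline_DERIV[OF smooth2_Du[OF sa] q1] hline_DERIV[OF smooth2_Dv[OF smooth2_Dv[OF sa]] q1]
      hline_DERIV[OF smooth2_Dv[OF sb] q1]
    by (auto intro!: derivative_eq_intros simp: q1_def q2_def bu power2_eq_square algebra_simps)
  hence "((\<lambda>s. Dv F1 (s, 0)) has_real_derivative
     Du E2 q2 * (Du a q1)\<^sup>2 * Dv (Dv a) q1
   + E2 q2 * (Du (Du a) q1 * Dv (Dv a) q1 + Du a q1 * Du (Dv (Dv a)) q1)
   + Du (Dv F2) q2 * (Du a q1)\<^sup>2 * (Dv b q1)\<^sup>2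
   + Dv F2 q2 * (Du (Du a) q1 * (Dv b q1)\<^sup>2 + 2 * Du a q1 * Dv b q1 * Du (Dv b) q1)) (at s0)"
    by (rule DERIV_local[OF J, rotated]) (use F1v_axis in auto)
  thus ?thesis by (intro Du_eqI) (simp add: q1_def)
qed

definition "I0 = {t. (s0, t) \<in> N}"
lemma I0: "open I0" "0 \<in> I0" using open_vline[OF N] q1 by (auto simp: I0_def)

lemma zeros_q1: "Dv a q1 = 0" "Du b q1 = 0" "F2 q2 = 0" "G2 q2 = 0" "Dv (Du a) q1 = 0"
  "Du F2 q2 = 0" "Du G2 q2 = 0"
proof -
  show "Dv a q1 = 0" using at_axis[OF q1N] by (simp add: q1_def)
  show "Du b q1 = 0" using bu_axis[OF q1N] by (simp add: q1_def)
  show "F2 q2 = 0" "G2 q2 = 0" using FG_axis[OF q2V q2axis] by auto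
  have "Du (Dv a) q1 = 0" by (rule Du_axis_zero[OF N q1N]) (use at_axis in \<open>auto simp: q1_def\<close>)
  thus "Dv (Du a) q1 = 0" using schwarz[OF N sa q1N] by simp
  show "Du F2 q2 = 0" by (rule Du_axis_zero[OF V2 q2V q2axis]) (use FG_axis in auto)
  show "Du G2 q2 = 0" by (rule Du_axis_zero[OF V2 q2V q2axis]) (use FG_axis in auto)
qed

lemma E1vv_q1: "Dv (Dv E1) q1 = (Du a q1)\<^sup>2 * (Du E2 q2 * Dv (Dv a) q1 + Dv (Dv E2) q2 * (Dv b q1)\<^sup>2)
   + 2 * E2 q2 * Du a q1 * Dv (Dv (Du a)) q1 + 4 * Dv F2 q2 * Dv b q1 * Du a q1 * Dv (Du b) q1"
proof -
  define c where "c = (\<lambda>t. (a (s0, t), b (s0, t)))"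
  define e1 where "e1 = (\<lambda>t. (Du E2 (c t) * Dv a (s0,t) + Dv E2 (c t) * Dv b (s0,t)) * (Du a (s0,t))\<^sup>2 + E2 (c t) * (2 * Du a (s0,t) * Dv (Du a) (s0,t))
    + 2 * ((Du F2 (c t) * Dv a (s0,t) + Dv F2 (c t) * Dv b (s0,t)) * Du a (s0,t) * Du b (s0,t) + F2 (c t) * Dv (Du a) (s0,t) * Du b (s0,t) + F2 (c t) * Du a (s0,t) * Dv (Du b) (s0,t))
    + (Du G2 (c t) * Dv a (s0,t) + Dv G2 (c t) * Dv b (s0,t)) * (Du b (s0,t))\<^sup>2 + G2 (c t) * (2 * Du b (s0,t) * Dv (Du b) (s0,t)))"
  have st1: "Dv E1 (s0, t) = e1 t" if t: "t \<in> I0" for t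
  proof -
    have x: "(s0, t) \<in> N" using t by (simp add: I0_def)
    have "((\<lambda>t. E2 (a (s0, t), b (s0, t)) * (Du a (s0, t))\<^sup>2 + 2 * F2 (a (s0, t), b (s0, t)) * Du a (s0, t) * Du b (s0, t) + G2 (a (s0, t), b (s0, t)) * (Du b (s0, t))\<^sup>2)
        has_real_derivative e1 t) (at t)"
      using vcomp[OF sE2 x] vcomp[OF sF2 x] vcomp[OF sG2 x]
        vline_DERIV[OF smooth2_Du[OF sa] x] vline_DERIV[OF smooth2_Du[OF sb] x]
      unfolding e1_def c_def by (auto intro!: derivative_eq_intros simp: power2_eq_square algebra_simps)
    hence "((\<lambda>t. E1 (s0, t)) has_real_derivative e1 t) (at t)"
      by (rule DERIV_local[OF I0(1) t, rotated]) (use E1 in \<open>auto simp: I0_def\<close>)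
    thus ?thesis by (intro Dv_eqI) simp
  qed
  have x: "(s0, 0) \<in> N" by (rule q1)
  have z: "Dv a (s0,0) = 0" "Du b (s0,0) = 0" "F2 (a (s0,0), b (s0,0)) = 0" "G2 (a (s0,0), b (s0,0)) = 0" "Dv (Du a) (s0,0) = 0"
    "Du F2 (a (s0,0), b (s0,0)) = 0" "Du G2 (a (s0,0), b (s0,0)) = 0" "Dv E2 (a (s0,0), b (s0,0)) = 0" "Dv G2 (a (s0,0), b (s0,0)) = 0"
    using zeros_q1 E2v G2v by (auto simp: q1_def q2_def)
  have "(e1 has_real_derivative (Du a q1)\<^sup>2 * (Du E2 q2 * Dv (Dv a) q1 + Dv (Dv E2) q2 * (Dv b q1)\<^sup>2)
   + 2 * E2 q2 * Du a q1 * Dv (Dv (Du a)) q1 + 4 * Dv F2 q2 * Dv b q1 * Du a q1 * Dv (Du b) q1) (at 0)"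
    using vcomp[OF sE2 x] vcomp[OF sF2 x] vcomp[OF sG2 x]
      vcomp[OF smooth2_Du[OF sE2] x] vcomp[OF smooth2_Du[OF sF2] x] vcomp[OF smooth2_Du[OF sG2] x]
      vcomp[OF smooth2_Dv[OF sE2] x] vcomp[OF smooth2_Dv[OF sF2] x] vcomp[OF smooth2_Dv[OF sG2] x]
      vline_DERIV[OF smooth2_Du[OF sa] x] vline_DERIV[OF smooth2_Du[OF sb] x]
      vline_DERIV[OF smooth2_Dv[OF sa] x] vline_DERIV[OF smooth2_Dv[OF sb] x]
      vline_DERIV[OF smooth2_Dv[OF smooth2_Du[OF sa]] x] vline_DERIV[OF smooth2_Dv[OF smooth2_Du[OF sb]] x]
    unfolding e1_def c_def by (auto intro!: derivative_eq_intros simp: z q1_def q2_def power2_eq_square algebra_simps)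
  hence "((\<lambda>t. Dv E1 (s0, t)) has_real_derivative (Du a q1)\<^sup>2 * (Du E2 q2 * Dv (Dv a) q1 + Dv (Dv E2) q2 * (Dv b q1)\<^sup>2)
   + 2 * E2 q2 * Du a q1 * Dv (Dv (Du a)) q1 + 4 * Dv F2 q2 * Dv b q1 * Du a q1 * Dv (Du b) q1) (at 0)"
    by (rule DERIV_local[OF I0, rotated]) (use st1 in auto)
  thus ?thesis by (intro Dv_eqI) (simp add: q1_def)
qed

lemma pow4: "(x::real) ^ 4 = x * (x * (x * x))"
  by (simp add: power_def numeral_eq_Suc)

lemma G1vv_q1: "Dv (Dv G1) q1 = 2 * E2 q2 * (Dv (Dv a) q1)\<^sup>2 + 4 * Dv F2 q2 * Dv (Dv a) q1 * (Dv b q1)\<^sup>2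
   + Dv (Dv G2) q2 * (Dv b q1)^4"
proof -
  define c where "c = (\<lambda>t. (a (s0, t), b (s0, t)))"
  define g1 where "g1 = (\<lambda>t. (Du E2 (c t) * Dv a (s0,t) + Dv E2 (c t) * Dv b (s0,t)) * (Dv a (s0,t))\<^sup>2 + E2 (c t) * (2 * Dv a (s0,t) * Dv (Dv a) (s0,t))
    + 2 * ((Du F2 (c t) * Dv a (s0,t) + Dv F2 (c t) * Dv b (s0,t)) * Dv a (s0,t) * Dv b (s0,t) + F2 (c t) * Dv (Dv a) (s0,t) * Dv b (s0,t) + F2 (c t) * Dv a (s0,t) * Dv (Dv b) (s0,t))
    + (Du G2 (c t) * Dv a (s0,t) + Dv G2 (c t) * Dv b (s0,t)) * (Dv b (s0,t))\<^sup>2 + G2 (c t) * (2 * Dv b (s0,t) * Dv (Dv b) (s0,t)))"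
  have st1: "Dv G1 (s0, t) = g1 t" if t: "t \<in> I0" for t
  proof -
    have x: "(s0, t) \<in> N" using t by (simp add: I0_def)
    have "((\<lambda>t. E2 (a (s0, t), b (s0, t)) * (Dv a (s0, t))\<^sup>2 + 2 * F2 (a (s0, t), b (s0, t)) * Dv a (s0, t) * Dv b (s0, t) + G2 (a (s0, t), b (s0, t)) * (Dv b (s0, t))\<^sup>2)
        has_real_derivative g1 t) (at t)"
      using vcomp[OF sE2 x] vcomp[OF sF2 x] vcomp[OF sG2 x]
        vline_DERIV[OF smooth2_Dv[OF sa] x] vline_DERIV[OF smooth2_Dv[OF sb] x]
      unfolding g1_def c_def by (auto intro!: derivative_eq_intros simp: power2_eq_square algebra_simps)
    hence "((\<lambda>t. G1 (s0, t)) has_real_derivative g1 t) (at t)"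
      by (rule DERIV_local[OF I0(1) t, rotated]) (use G1 in \<open>auto simp: I0_def\<close>)
    thus ?thesis by (intro Dv_eqI) simp
  qed
  have x: "(s0, 0) \<in> N" by (rule q1)
  have z: "Dv a (s0,0) = 0" "Du b (s0,0) = 0" "F2 (a (s0,0), b (s0,0)) = 0" "G2 (a (s0,0), b (s0,0)) = 0" "Dv (Du a) (s0,0) = 0"
    "Du F2 (a (s0,0), b (s0,0)) = 0" "Du G2 (a (s0,0), b (s0,0)) = 0" "Dv E2 (a (s0,0), b (s0,0)) = 0" "Dv G2 (a (s0,0), b (s0,0)) = 0"
    using zeros_q1 E2v G2v by (auto simp: q1_def q2_def)
  have "(g1 has_real_derivative 2 * E2 q2 * (Dv (Dv a) q1)\<^sup>2 + 4 * Dv F2 q2 * Dv (Dv a) q1 * (Dv b q1)\<^sup>2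
   + Dv (Dv G2) q2 * (Dv b q1)^4) (at 0)"
    using vcomp[OF sE2 x] vcomp[OF sF2 x] vcomp[OF sG2 x]
      vcomp[OF smooth2_Du[OF sE2] x] vcomp[OF smooth2_Du[OF sF2] x] vcomp[OF smooth2_Du[OF sG2] x]
      vcomp[OF smooth2_Dv[OF sE2] x] vcomp[OF smooth2_Dv[OF sF2] x] vcomp[OF smooth2_Dv[OF sG2] x]
      vline_DERIV[OF smooth2_Dv[OF sa] x] vline_DERIV[OF smooth2_Dv[OF sb] x]
      vline_DERIV[OF smooth2_Dv[OF smooth2_Dv[OF sa]] x] vline_DERIV[OF smooth2_Dv[OF smooth2_Dv[OF sb]] x]
    unfolding g1_def c_def by (auto intro!: derivative_eq_intros simp: z q1_def q2_def power2_eq_square pow4 algebra_simps)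
  hence "((\<lambda>t. Dv G1 (s0, t)) has_real_derivative 2 * E2 q2 * (Dv (Dv a) q1)\<^sup>2 + 4 * Dv F2 q2 * Dv (Dv a) q1 * (Dv b q1)\<^sup>2
   + Dv (Dv G2) q2 * (Dv b q1)^4) (at 0)"
    by (rule DERIV_local[OF I0, rotated]) (use st1 in auto)
  thus ?thesis by (intro Dv_eqI) (simp add: q1_def)
qed

lemma F1v_q1: "Dv F1 q1 = E2 q2 * Du a q1 * Dv (Dv a) q1 + Dv F2 q2 * Du a q1 * (Dv b q1)\<^sup>2"
  using F1v_axis[OF J(2)] by (simp add: q1_def q2_def)

lemma schwarz_q1: "Du (Dv b) q1 = Dv (Du b) q1" "Du (Dv (Dv a)) q1 = Dv (Dv (Du a)) q1"
proof -
  show "Du (Dv b) q1 = Dv (Du b) q1" by (rule schwarz[OF N sb q1N])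
  have "Du (Dv (Dv a)) q1 = Dv (Du (Dv a)) q1" by (rule schwarz[OF N smooth2_Dv[OF sa] q1N])
  also have "\<dots> = Dv (Dv (Du a)) q1"
    by (rule Dv_cong[OF N q1N]) (use schwarz[OF N sa] in auto)
  finally show "Du (Dv (Dv a)) q1 = Dv (Dv (Du a)) q1" .
qed

lemma num_id: "- Dv F1 q1 * Du E1 q1 + 2 * E1 q1 * Du (Dv F1) q1 - E1 q1 * Dv (Dv E1) q1
   = (Du a q1)^4 * (Dv b q1)\<^sup>2 * (- Dv F2 q2 * Du E2 q2 + 2 * E2 q2 * Du (Dv F2) q2 - E2 q2 * Dv (Dv E2) q2)"
  unfolding F1v_q1 E1u_q1 E1_q1 F1uv_q1 E1vv_q1 schwarz_q1
  by (simp add: power2_eq_square power3_eq_cube pow4 algebra_simps)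

lemma lam_id: "E1 q1 * Dv (Dv G1) q1 - 2 * (Dv F1 q1)\<^sup>2
   = (Du a q1)\<^sup>2 * (Dv b q1)^4 * (E2 q2 * Dv (Dv G2) q2 - 2 * (Dv F2 q2)\<^sup>2)"
  unfolding F1v_q1 E1_q1 G1vv_q1
  by (simp add: power2_eq_square pow4 algebra_simps)

end


lemma pow4': "(x::real) ^ 4 = x * (x * (x * x))"
  by (simp add: power_def numeral_eq_Suc)

lemma final_alg:
  fixes E1 E2 as bt n1 n2 Q1 Q2 l1 l2 :: real
  assumes E2: "E2 > 0" and E1p: "E1 > 0" and E1: "E1 = E2 * as\<^sup>2" and n: "n1 = as^4 * bt\<^sup>2 * n2"
    and Q: "Q1 = as\<^sup>2 * bt^4 * Q2" and l1: "l1 = sqrt (Q1/2)" and l2: "l2 = sqrt (Q2/2)"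
    and l1p: "l1 > 0" and l2p: "l2 > 0"
  shows "n1 / (2 * E1 powr (3/2) * l1) = n2 / (2 * E2 powr (3/2) * l2)"
proof -
  have as: "as \<noteq> 0" using E1p E1 by auto
  have "l1 = sqrt (as\<^sup>2 * (bt\<^sup>2)\<^sup>2 * (Q2/2))" using l1 Q by (simp add: power2_eq_square pow4' algebra_simps)
  also have "\<dots> = sqrt (as\<^sup>2) * sqrt ((bt\<^sup>2)\<^sup>2) * sqrt (Q2/2)" by (simp only: real_sqrt_mult)
  also have "\<dots> = \<bar>as\<bar> * bt\<^sup>2 * l2" by (simp only: real_sqrt_abs l2) simp
  finally have l1e: "l1 = \<bar>as\<bar> * bt\<^sup>2 * l2" .
  have bt: "bt \<noteq> 0" using l1p l1e by auto
  have pa: "\<bar>as\<bar> > 0" using as by simp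
  have pw: "(as\<^sup>2) powr (3/2) = \<bar>as\<bar> ^ 3"
  proof -
    have e1: "as\<^sup>2 = \<bar>as\<bar> powr 2" using powr_realpow[OF pa, of 2] by simp
    have c1: "(\<bar>as\<bar> powr 2) powr (3/2) = \<bar>as\<bar> powr (2 * (3/2))" by (rule powr_powr)
    have h: "(2::real) * (3/2) = real 3" by simp
    have c2: "\<bar>as\<bar> powr (2 * (3/2)) = \<bar>as\<bar> ^ 3" unfolding h by (rule powr_realpow[OF pa])
    show ?thesis by (subst e1, subst c1, rule c2)
  qed
  have Ep: "E1 powr (3/2) = E2 powr (3/2) * \<bar>as\<bar> ^ 3" using E1 E2 pw by (simp add: powr_mult)
  have a4: "\<bar>as\<bar> ^ 3 * \<bar>as\<bar> = as ^ 4"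
  proof -
    have "\<bar>as\<bar> ^ 3 * \<bar>as\<bar> = \<bar>as\<bar> ^ 4" by (simp add: pow4' power3_eq_cube algebra_simps)
    also have "\<dots> = as ^ 4" by (simp add: power_even_abs_numeral)
    finally show ?thesis .
  qed
  have E2p: "E2 powr (3/2) > 0" using E2 by simp
  have "n1 / (2 * E1 powr (3/2) * l1) = (as^4 * bt\<^sup>2 * n2) / ((as^4 * bt\<^sup>2) * (2 * E2 powr (3/2) * l2))"
  proof -
    have "2 * E1 powr (3/2) * l1 = (\<bar>as\<bar> ^ 3 * \<bar>as\<bar>) * bt\<^sup>2 * (2 * E2 powr (3/2) * l2)"
      unfolding Ep l1e by (simp add: algebra_simps)
    also have "\<dots> = (as^4 * bt\<^sup>2) * (2 * E2 powr (3/2) * l2)" unfolding a4 ..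
    finally have d: "2 * E1 powr (3/2) * l1 = (as^4 * bt\<^sup>2) * (2 * E2 powr (3/2) * l2)" .
    show ?thesis unfolding n d ..
  qed
  also have "\<dots> = n2 / (2 * E2 powr (3/2) * l2)" using as bt by simp
  finally show ?thesis .
qed


lemma smoothV_cont:
  assumes "smoothV_on V phi" "open V"
  shows "continuous_on V phi"
proof -
  have "\<And>x. x \<in> V \<Longrightarrow> continuous (at x) phi"
  proof -
    fix x assume x: "x \<in> V"
    have "(\<lambda>y. (fst (phi y), snd (phi y))) differentiable (at x)"
      by (rule differentiable_Pair; rule smooth2_diff[OF _ x]) (use assms smoothV_fst smoothV_snd in auto)
    hence "continuous (at x) (\<lambda>y. (fst (phi y), snd (phi y)))" by (rule differentiable_imp_continuous_within)
    thus "continuous (at x) phi" by simp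
  qed
  thus ?thesis by (simp add: continuous_at_imp_continuous_on)
qed

lemma ip_expand:
  "ip E0 F0 G0 x (\<alpha> *\<^sub>R A + \<beta> *\<^sub>R B) (\<gamma> *\<^sub>R A + \<delta> *\<^sub>R B) =
     \<alpha> * \<gamma> * ip E0 F0 G0 x A A + (\<alpha> * \<delta> + \<beta> * \<gamma>) * ip E0 F0 G0 x A B + \<beta> * \<delta> * ip E0 F0 G0 x B B"
  unfolding ip_def by (simp add: algebra_simps)

lemma smoothV_subset: "smoothV_on V phi \<Longrightarrow> N \<subseteq> V \<Longrightarrow> smoothV_on N phi"
  unfolding smoothV_on_def using smooth2_subset by blast


theorem proposition2p23:
  fixes U V1 V2 :: "(real \<times> real) set"
    and E0 F0 G0 lam1 lam2 :: "real \<times> real \<Rightarrow> real"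
    and phi1 phi2 :: "real \<times> real \<Rightarrow> real \<times> real"
    and p :: "real \<times> real" and u1 u2 :: real
  assumes "kossowski_metric U E0 F0 G0"
    and "A2_point U E0 F0 G0 p"
    and "strongly_adapted U E0 F0 G0 p V1 phi1"
    and "strongly_adapted U E0 F0 G0 p V2 phi2"
    and "good_lambda E0 F0 G0 V1 phi1 lam1"
    and "good_lambda E0 F0 G0 V2 phi2 lam2"
    and "(u1, 0) \<in> V1" and "phi1 (u1, 0) = p"
    and "(u2, 0) \<in> V2" and "phi2 (u2, 0) = p"
  shows "kappa_s E0 F0 G0 phi1 lam1 u1 = kappa_s E0 F0 G0 phi2 lam2 u2"
proof -
  note ko = assms(1) and sa1 = assms(3) and sa2 = assms(4) and gl1 = assms(5) and gl2 = assms(6)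
  have adm: "admissible U E0 F0 G0" using ko unfolding kossowski_metric_def by blast
  have psd: "psd_metric U E0 F0 G0" using adm unfolding admissible_def by blast
  interpret c1: sa_chart U E0 F0 G0 V1 phi1 lam1
    using psd sa1 gl1 unfolding strongly_adapted_def by unfold_locales auto
  interpret c2: sa_chart_adm U E0 F0 G0 V2 phi2 lam2
    using psd sa2 gl2 adm unfolding strongly_adapted_def by unfold_locales auto
  obtain psi2 where psi: "\<And>x. x \<in> V2 \<Longrightarrow> psi2 (phi2 x) = x" and spsi: "smoothV_on (phi2 ` V2) psi2"
    using c2.cs unfolding coord_system_def by blast
  have T: "open (phi2 ` V2)" using c2.cs unfolding coord_system_def by blast
  have inj2: "inj_on phi2 V2" using c2.cs unfolding coord_system_def by blast
  define N where "N = V1 \<inter> phi1 -` (phi2 ` V2)"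
  have Nopen: "open N" unfolding N_def
    by (rule continuous_open_preimage[OF smoothV_cont[OF c1.smV c1.Vopen] c1.Vopen T])
  have NV1: "N \<subseteq> V1" unfolding N_def by blast
  define a where "a = (\<lambda>x. fst (psi2 (phi1 x)))"
  define b where "b = (\<lambda>x. snd (psi2 (phi1 x)))"
  have tau: "(a x, b x) \<in> V2 \<and> phi2 (a x, b x) = phi1 x" if x: "x \<in> N" for x
  proof -
    obtain y where y: "y \<in> V2" "phi1 x = phi2 y" using x unfolding N_def by blast
    have "(a x, b x) = y" unfolding a_def b_def using psi[OF y(1)] y(2) by simp
    thus ?thesis using y by simp
  qed
  have sN: "smoothV_on N phi1" by (rule smoothV_subset[OF c1.smV NV1])
  have sub: "phi1 ` N \<subseteq> phi2 ` V2" unfolding N_def by blast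
  have sa: "smooth2_on N a" unfolding a_def
    by (rule smooth2_comp_phi[OF Nopen T sub sN smoothV_fst[OF spsi]])
  have sb: "smooth2_on N b" unfolding b_def
    by (rule smooth2_comp_phi[OF Nopen T sub sN smoothV_snd[OF spsi]])
  have "phi2 (u2, 0) \<in> phi2 ` V2" using assms(9) by (rule imageI)
  hence "phi1 (u1, 0) \<in> phi2 ` V2" using assms(8,10) by simp
  hence q1N: "(u1, 0) \<in> N" unfolding N_def using assms(7) by simp
  have tq: "(a (u1, 0), b (u1, 0)) = (u2, 0)"
  proof -
    have "phi2 (a (u1, 0), b (u1, 0)) = phi2 (u2, 0)" using tau[OF q1N] assms(8,10) by simp
    thus ?thesis using inj2 tau[OF q1N] assms(9) unfolding inj_on_def by blast
  qed
  have b_axis: "b x = 0" if "x \<in> N" "snd x = 0" for x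
  proof -
    have "singular_pt U E0 F0 G0 (phi1 x)" using c1.sing[of x] that NV1 by auto
    hence "singular_pt U E0 F0 G0 (phi2 (a x, b x))" using tau[OF that(1)] by simp
    thus ?thesis using c2.sing[of "(a x, b x)"] tau[OF that(1)] by simp
  qed
  have chain: "DuV phi1 x = Du a x *\<^sub>R DuV phi2 (a x, b x) + Du b x *\<^sub>R DvV phi2 (a x, b x)
             \<and> DvV phi1 x = Dv a x *\<^sub>R DuV phi2 (a x, b x) + Dv b x *\<^sub>R DvV phi2 (a x, b x)" if x: "x \<in> N" for x
  proof -
    have da: "a differentiable (at x)" "b differentiable (at x)" using smooth2_diff[OF sa x] smooth2_diff[OF sb x] by auto
    have dq: "(\<lambda>z. fst (phi2 z)) differentiable (at (a x, b x))" "(\<lambda>z. snd (phi2 z)) differentiable (at (a x, b x))"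
      using smooth2_diff[OF smoothV_fst[OF c2.smV]] smooth2_diff[OF smoothV_snd[OF c2.smV]] tau[OF x] by auto
    have e1: "\<And>y. y \<in> N \<Longrightarrow> fst (phi1 y) = fst (phi2 (a y, b y))" using tau by simp
    have e2: "\<And>y. y \<in> N \<Longrightarrow> snd (phi1 y) = snd (phi2 (a y, b y))" using tau by simp
    have "Du (\<lambda>y. fst (phi1 y)) x = Du (\<lambda>y. fst (phi2 (a y, b y))) x" by (rule Du_cong[OF Nopen x e1])
    also have "\<dots> = Du (\<lambda>z. fst (phi2 z)) (a x, b x) * Du a x + Dv (\<lambda>z. fst (phi2 z)) (a x, b x) * Du b x"
      by (rule Du_comp[OF dq(1) da])
    finally have u1: "Du (\<lambda>y. fst (phi1 y)) x = Du (\<lambda>z. fst (phi2 z)) (a x, b x) * Du a x + Dv (\<lambda>z. fst (phi2 z)) (a x, b x) * Du b x" .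
    have "Du (\<lambda>y. snd (phi1 y)) x = Du (\<lambda>y. snd (phi2 (a y, b y))) x" by (rule Du_cong[OF Nopen x e2])
    also have "\<dots> = Du (\<lambda>z. snd (phi2 z)) (a x, b x) * Du a x + Dv (\<lambda>z. snd (phi2 z)) (a x, b x) * Du b x"
      by (rule Du_comp[OF dq(2) da])
    finally have u2: "Du (\<lambda>y. snd (phi1 y)) x = Du (\<lambda>z. snd (phi2 z)) (a x, b x) * Du a x + Dv (\<lambda>z. snd (phi2 z)) (a x, b x) * Du b x" .
    have "Dv (\<lambda>y. fst (phi1 y)) x = Dv (\<lambda>y. fst (phi2 (a y, b y))) x" by (rule Dv_cong[OF Nopen x e1])
    also have "\<dots> = Du (\<lambda>z. fst (phi2 z)) (a x, b x) * Dv a x + Dv (\<lambda>z. fst (phi2 z)) (a x, b x) * Dv b x"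
      by (rule Dv_comp[OF dq(1) da])
    finally have v1: "Dv (\<lambda>y. fst (phi1 y)) x = Du (\<lambda>z. fst (phi2 z)) (a x, b x) * Dv a x + Dv (\<lambda>z. fst (phi2 z)) (a x, b x) * Dv b x" .
    have "Dv (\<lambda>y. snd (phi1 y)) x = Dv (\<lambda>y. snd (phi2 (a y, b y))) x" by (rule Dv_cong[OF Nopen x e2])
    also have "\<dots> = Du (\<lambda>z. snd (phi2 z)) (a x, b x) * Dv a x + Dv (\<lambda>z. snd (phi2 z)) (a x, b x) * Dv b x"
      by (rule Dv_comp[OF dq(2) da])
    finally have v2: "Dv (\<lambda>y. snd (phi1 y)) x = Du (\<lambda>z. snd (phi2 z)) (a x, b x) * Dv a x + Dv (\<lambda>z. snd (phi2 z)) (a x, b x) * Dv b x" .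
    show ?thesis unfolding DuV_def DvV_def u1 u2 v1 v2 by (simp add: algebra_simps)
  qed
  define E2 where "E2 = cE E0 F0 G0 phi2"
  define F2 where "F2 = cF E0 F0 G0 phi2"
  define G2 where "G2 = cG E0 F0 G0 phi2"
  define E1 where "E1 = cE E0 F0 G0 phi1"
  define F1 where "F1 = cF E0 F0 G0 phi1"
  define G1 where "G1 = cG E0 F0 G0 phi1"
  have FW: "ip E0 F0 G0 (phi2 z) (DvV phi2 z) (DuV phi2 z) = F2 z" for z
    unfolding F2_def cF_def using ip_sym by metis
  have rE1: "E1 x = E2 (a x, b x) * (Du a x)\<^sup>2 + 2 * F2 (a x, b x) * Du a x * Du b x + G2 (a x, b x) * (Du b x)\<^sup>2"
    if x: "x \<in> N" for x
    unfolding E1_def cE_def using chain[OF x] tau[OF x]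
    by (simp add: ip_expand FW E2_def[unfolded cE_def] F2_def[unfolded cF_def] G2_def[unfolded cG_def] power2_eq_square algebra_simps)
  have rF1: "F1 x = E2 (a x, b x) * Du a x * Dv a x + F2 (a x, b x) * (Du a x * Dv b x + Dv a x * Du b x) + G2 (a x, b x) * Du b x * Dv b x"
    if x: "x \<in> N" for x
    unfolding F1_def cF_def using chain[OF x] tau[OF x]
    by (simp add: ip_expand FW E2_def[unfolded cE_def] F2_def[unfolded cF_def] G2_def[unfolded cG_def] algebra_simps)
  have rG1: "G1 x = E2 (a x, b x) * (Dv a x)\<^sup>2 + 2 * F2 (a x, b x) * Dv a x * Dv b x + G2 (a x, b x) * (Dv b x)\<^sup>2"
    if x: "x \<in> N" for x
    unfolding G1_def cG_def using chain[OF x] tau[OF x]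
    by (simp add: ip_expand FW E2_def[unfolded cE_def] F2_def[unfolded cF_def] G2_def[unfolded cG_def] power2_eq_square algebra_simps)
  have at_axis: "Dv a x = 0" if x: "x \<in> N" "snd x = 0" for x
  proof -
    have ax: "snd (a x, b x) = 0" using b_axis[OF x] by simp
    have n1: "DvV phi1 x \<in> null_space E0 F0 G0 (phi1 x)" using c1.nul[of x] x NV1 by auto
    have n2: "DvV phi2 (a x, b x) \<in> null_space E0 F0 G0 (phi1 x)" using c2.nul[OF _ ax] tau[OF x(1)] by auto
    have "ip E0 F0 G0 (phi1 x) (DvV phi1 x) (DuV phi2 (a x, b x)) = 0" using n1 unfolding null_space_def by blast
    moreover have "ip E0 F0 G0 (phi1 x) (DvV phi2 (a x, b x)) (DuV phi2 (a x, b x)) = 0" using n2 unfolding null_space_def by blast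
    ultimately have "Dv a x * E2 (a x, b x) = 0"
      using chain[OF x(1)] tau[OF x(1)] ip_lin[of E0 F0 G0 "phi1 x" "Dv a x" "DuV phi2 (a x, b x)" "Dv b x" "DvV phi2 (a x, b x)"]
      unfolding E2_def cE_def by simp
    moreover have "E2 (a x, b x) > 0" unfolding E2_def using c2.E_pos[OF _ ax] tau[OF x(1)] by auto
    ultimately show ?thesis by simp
  qed
  interpret tr: trans N V2 a b E2 F2 G2 E1 F1 G1 u1
  proof (unfold_locales)
    show "open N" by (rule Nopen)
    show "open V2" by (rule c2.Vopen)
    show "smooth2_on N a" "smooth2_on N b" by (rule sa, rule sb)
    show "\<And>x. x \<in> N \<Longrightarrow> (a x, b x) \<in> V2" using tau by blast
    show "smooth2_on V2 E2" "smooth2_on V2 F2" "smooth2_on V2 G2" unfolding E2_def F2_def G2_def by (rule c2.sEFG)+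
    show "(u1, 0) \<in> N" by (rule q1N)
    show "\<And>x. x \<in> N \<Longrightarrow> snd x = 0 \<Longrightarrow> b x = 0" by (rule b_axis)
    show "\<And>x. x \<in> N \<Longrightarrow> snd x = 0 \<Longrightarrow> Dv a x = 0" by (rule at_axis)
    show "\<And>y. y \<in> V2 \<Longrightarrow> snd y = 0 \<Longrightarrow> F2 y = 0 \<and> G2 y = 0" unfolding F2_def G2_def by (rule c2.axis_FG)
    show "Dv E2 (a (u1, 0), b (u1, 0)) = 0" unfolding tq E2_def by (rule c2.DvE_axis) (use assms(9) in auto)
    show "Dv G2 (a (u1, 0), b (u1, 0)) = 0" unfolding tq G2_def by (rule c2.DvG_axis) (use assms(9) in auto)
    show "\<And>x. x \<in> N \<Longrightarrow> E1 x = E2 (a x, b x) * (Du a x)\<^sup>2 + 2 * F2 (a x, b x) * Du a x * Du b x + G2 (a x, b x) * (Du b x)\<^sup>2"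
      by (rule rE1)
    show "\<And>x. x \<in> N \<Longrightarrow> F1 x = E2 (a x, b x) * Du a x * Dv a x + F2 (a x, b x) * (Du a x * Dv b x + Dv a x * Du b x) + G2 (a x, b x) * Du b x * Dv b x"
      by (rule rF1)
    show "\<And>x. x \<in> N \<Longrightarrow> G1 x = E2 (a x, b x) * (Dv a x)\<^sup>2 + 2 * F2 (a x, b x) * Dv a x * Dv b x + G2 (a x, b x) * (Dv b x)\<^sup>2"
      by (rule rG1)
  qed
  have q1e: "tr.q1 = (u1, 0)" by (simp add: tr.q1_def)
  have q2e: "tr.q2 = (u2, 0)" using tq by (simp add: tr.q2_def)
  have k1: "kappa_s E0 F0 G0 phi1 lam1 u1 =
     (- Dv F1 (u1, 0) * Du E1 (u1, 0) + 2 * E1 (u1, 0) * Du (Dv F1) (u1, 0) - E1 (u1, 0) * Dv (Dv E1) (u1, 0))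
       / (2 * E1 (u1, 0) powr (3/2) * Dv lam1 (u1, 0))"
    unfolding kappa_s_def E1_def F1_def Let_def ..
  have k2: "kappa_s E0 F0 G0 phi2 lam2 u2 =
     (- Dv F2 (u2, 0) * Du E2 (u2, 0) + 2 * E2 (u2, 0) * Du (Dv F2) (u2, 0) - E2 (u2, 0) * Dv (Dv E2) (u2, 0))
       / (2 * E2 (u2, 0) powr (3/2) * Dv lam2 (u2, 0))"
    unfolding kappa_s_def E2_def F2_def Let_def ..
  show ?thesis unfolding k1 k2
  proof (rule final_alg)
    show "E2 (u2, 0) > 0" unfolding E2_def by (rule c2.E_pos) (use assms(9) in auto)
    show "E1 (u1, 0) > 0" unfolding E1_def by (rule c1.E_pos) (use assms(7) in auto)
    show "E1 (u1, 0) = E2 (u2, 0) * (Du a (u1, 0))\<^sup>2" using tr.E1_q1 q1e q2e by simp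
    show "- Dv F1 (u1, 0) * Du E1 (u1, 0) + 2 * E1 (u1, 0) * Du (Dv F1) (u1, 0) - E1 (u1, 0) * Dv (Dv E1) (u1, 0)
       = (Du a (u1, 0))^4 * (Dv b (u1, 0))\<^sup>2 * (- Dv F2 (u2, 0) * Du E2 (u2, 0) + 2 * E2 (u2, 0) * Du (Dv F2) (u2, 0) - E2 (u2, 0) * Dv (Dv E2) (u2, 0))"
      using tr.num_id q1e q2e by simp
    show "E1 (u1, 0) * Dv (Dv G1) (u1, 0) - 2 * (Dv F1 (u1, 0))\<^sup>2
       = (Du a (u1, 0))\<^sup>2 * (Dv b (u1, 0))^4 * (E2 (u2, 0) * Dv (Dv G2) (u2, 0) - 2 * (Dv F2 (u2, 0))\<^sup>2)"
      using tr.lam_id q1e q2e by simp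
    show "Dv lam1 (u1, 0) = sqrt ((E1 (u1, 0) * Dv (Dv G1) (u1, 0) - 2 * (Dv F1 (u1, 0))\<^sup>2) / 2)"
      unfolding E1_def F1_def G1_def by (rule c1.lamv_sqrt) (use assms(7) in auto)
    show "Dv lam2 (u2, 0) = sqrt ((E2 (u2, 0) * Dv (Dv G2) (u2, 0) - 2 * (Dv F2 (u2, 0))\<^sup>2) / 2)"
      unfolding E2_def F2_def G2_def by (rule c2.lamv_sqrt) (use assms(9) in auto)
    show "Dv lam1 (u1, 0) > 0" by (rule c1.lamv_pos) (use assms(7) in auto)
    show "Dv lam2 (u2, 0) > 0" by (rule c2.lamv_pos) (use assms(9) in auto)
  qed
qed


end
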